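(* Consider momentum gradient flow with parameter $\lambda>0$ on a 2-layer diagonal linear network as described in the context. Assume $u_t,v_t\in L^\infty(0,\infty)$ and that $\Delta_\infty=\lim_{t\to\infty}\Delta_t$ has all coordinates nonzero. Then the limit $\lim_{t\to\infty}\int_0^t\nabla L(\theta_s)\,\mathrm{d}s=\int_0^\infty\nabla L(\theta_t)\,\mathrm{d}t$ exists, and consequently $\lim_{t\to\infty}\int_0^t\nabla L(\theta_s)e^{-\frac{t-s}{\lambda}}\,\mathrm{d}s=0$.
   Context: Data $x_1,\dots,x_n\in\mathbb{R}^d$, $y\in\mathbb{R}^n$, loss $L(\theta)=\frac{1}{2n}\sum_{i=1}^n(y_i-\langle x_i,\theta\rangle)^2$. Momentum gradient flow on the diagonal linear network: $(u_t,v_t)$ solves $\lambda\ddot u_t+\dot u_t+\nabla L(\theta_t)\odot v_t=0$, $\lambda\ddot v_t+\dot v_t+\nabla L(\theta_t)\odot u_t=0$, $\theta_t=u_t\odot v_t$, with $\dot u_0=\dot v_0=0$ and $|u_0^2-v_0^2|$ having all coordinates nonzero. $\Delta_t=|u_t^2-v_t^2|$ coordinate-wise. *)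

theory Defs
  imports "HOL-Analysis.Analysis"
begin

definition lossL :: "('n::finite \<Rightarrow> real^'d::finite) \<Rightarrow> ('n \<Rightarrow> real) \<Rightarrow> real^'d \<Rightarrow> real" where
  "lossL x y \<theta> = (1 / (2 * real CARD('n))) * (\<Sum>i\<in>UNIV. (y i - x i \<bullet> \<theta>)\<^sup>2)"

definition gradL :: "('n::finite \<Rightarrow> real^'d::finite) \<Rightarrow> ('n \<Rightarrow> real) \<Rightarrow> real^'d \<Rightarrow> real^'d" where
  "gradL x y \<theta> = - ((1 / real CARD('n)) *\<^sub>R (\<Sum>i\<in>UNIV. (y i - x i \<bullet> \<theta>) *\<^sub>R x i))"

lemma gradL_is_gradient: "GDERIV (lossL x y) \<theta> :> gradL x y \<theta>"
  unfolding gderiv_def lossL_def gradL_def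
  apply (rule derivative_eq_intros refl)+
  apply (simp add: inner_sum_left inner_diff_left algebra_simps power2_eq_square sum_distrib_left sum_subtractf fun_eq_iff inner_commute)
  apply (simp add: inner_sum_right sum_divide_distrib add_divide_distrib mult.commute mult.left_commute)
  done

end

theory Submission
  imports Defs
begin


lemma at_Icc_eq_atLeast:
  fixes a b t :: real
  assumes "a \<le> t" "t < b"
  shows "at t within {a..b} = at t within {a..}"
  by (rule at_within_nhd[where S="{..<b}"]) (use assms in auto)

lemma mvt_real:
  fixes f f' :: "real \<Rightarrow> real"
  assumes "a \<le> b" "\<And>x. a \<le> x \<Longrightarrow> x \<le> b \<Longrightarrow> (f has_real_derivative f' x) (at x within {a..b})"
  shows "\<exists>\<xi>\<in>{a..b}. f b - f a = f' \<xi> * (b - a)"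
  using mvt_very_simple[of a b f "\<lambda>x h. f' x * h"] assms
  by (auto simp: has_field_derivative_def)

definition DW :: "(real \<Rightarrow> real) \<Rightarrow> (real \<Rightarrow> real) \<Rightarrow> real \<Rightarrow> bool" where
  "DW f f' T \<longleftrightarrow> (\<forall>t\<ge>T. (f has_real_derivative f' t) (at t within {T..}))"

lemma DW_mvt:
  assumes "DW f f' T" "T \<le> a" "a \<le> b"
  shows "\<exists>\<xi>\<in>{a..b}. f b - f a = f' \<xi> * (b - a)"
  apply (rule mvt_real[OF assms(3)])
  apply (rule has_field_derivative_subset[where s="{T..}"])
  using assms unfolding DW_def by auto

lemma DW_mono_T:
  assumes "DW f f' T" "T \<le> T'"
  shows "DW f f' T'"
  using assms unfolding DW_def by (auto intro: has_field_derivative_subset[where s="{T..}"])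

lemma DW_nonpos_dec:
  assumes "DW f f' T" "\<And>t. t \<ge> T \<Longrightarrow> f' t \<le> 0" "T \<le> s" "s \<le> t"
  shows "f t \<le> f s"
proof -
  obtain \<xi> where "\<xi> \<in> {s..t}" "f t - f s = f' \<xi> * (t - s)"
    using DW_mvt[OF assms(1,3,4)] by blast
  moreover have "f' \<xi> * (t - s) \<le> 0"
    using assms \<open>\<xi> \<in> {s..t}\<close> by (intro mult_nonpos_nonneg) auto
  ultimately show ?thesis by linarith
qed

lemma DW_nonneg_inc:
  assumes "DW f f' T" "\<And>t. t \<ge> T \<Longrightarrow> f' t \<ge> 0" "T \<le> s" "s \<le> t"
  shows "f s \<le> f t"
proof -
  obtain \<xi> where "\<xi> \<in> {s..t}" "f t - f s = f' \<xi> * (t - s)"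
    using DW_mvt[OF assms(1,3,4)] by blast
  moreover have "f' \<xi> * (t - s) \<ge> 0"
    using assms \<open>\<xi> \<in> {s..t}\<close> by (intro mult_nonneg_nonneg) auto
  ultimately show ?thesis by linarith
qed

definition LIP :: "(real \<Rightarrow> real) \<Rightarrow> real \<Rightarrow> real \<Rightarrow> bool" where
  "LIP f M T \<longleftrightarrow> (\<forall>s\<ge>T. \<forall>t\<ge>T. \<bar>f s - f t\<bar> \<le> M * \<bar>s - t\<bar>)"

lemma DW_LIP:
  assumes "DW f f' T" "\<And>t. t \<ge> T \<Longrightarrow> \<bar>f' t\<bar> \<le> M"
  shows "LIP f M T"
  unfolding LIP_def
proof (intro allI impI)
  fix s t assume st: "s \<ge> T" "t \<ge> T"
  have *: "\<bar>f b - f a\<bar> \<le> M * \<bar>b - a\<bar>" if ab: "T \<le> a" "a \<le> b" for a b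
  proof -
    obtain \<xi> where "\<xi> \<in> {a..b}" "f b - f a = f' \<xi> * (b - a)"
      using DW_mvt[OF assms(1) ab] by blast
    moreover have "\<bar>f' \<xi>\<bar> * \<bar>b - a\<bar> \<le> M * \<bar>b - a\<bar>"
      using assms(2)[of \<xi>] \<open>\<xi> \<in> {a..b}\<close> ab by (intro mult_right_mono) auto
    ultimately show ?thesis by (simp add: abs_mult)
  qed
  show "\<bar>f s - f t\<bar> \<le> M * \<bar>s - t\<bar>"
  proof (cases "s \<le> t")
    case True then show ?thesis using *[of s t] st by (simp add: abs_minus_commute)
  next
    case False then show ?thesis using *[of t s] st by simp
  qed
qed

lemma LIP_add: "LIP f M T \<Longrightarrow> LIP g N T \<Longrightarrow> LIP (\<lambda>t. f t + g t) (M + N) T"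
  unfolding LIP_def
proof (intro allI impI)
  fix s t assume "\<forall>s\<ge>T. \<forall>t\<ge>T. \<bar>f s - f t\<bar> \<le> M * \<bar>s - t\<bar>" "\<forall>s\<ge>T. \<forall>t\<ge>T. \<bar>g s - g t\<bar> \<le> N * \<bar>s - t\<bar>" "T \<le> s" "T \<le> t"
  then have "\<bar>f s - f t\<bar> \<le> M * \<bar>s - t\<bar>" "\<bar>g s - g t\<bar> \<le> N * \<bar>s - t\<bar>" by auto
  then show "\<bar>f s + g s - (f t + g t)\<bar> \<le> (M + N) * \<bar>s - t\<bar>" by (simp add: algebra_simps)
qed

lemma LIP_cmult: "LIP f M T \<Longrightarrow> LIP (\<lambda>t. c * f t) (\<bar>c\<bar> * M) T"
  unfolding LIP_def
proof (intro allI impI)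
  fix s t assume "\<forall>s\<ge>T. \<forall>t\<ge>T. \<bar>f s - f t\<bar> \<le> M * \<bar>s - t\<bar>" "T \<le> s" "T \<le> t"
  then have "\<bar>f s - f t\<bar> \<le> M * \<bar>s - t\<bar>" by auto
  then have "\<bar>c\<bar> * \<bar>f s - f t\<bar> \<le> \<bar>c\<bar> * (M * \<bar>s - t\<bar>)" by (rule mult_left_mono) auto
  then show "\<bar>c * f s - c * f t\<bar> \<le> \<bar>c\<bar> * M * \<bar>s - t\<bar>"
    by (simp add: abs_mult right_diff_distrib[symmetric] mult.assoc)
qed

lemma LIP_mult:
  assumes "LIP f M T" "LIP g N T" "\<And>t. t \<ge> T \<Longrightarrow> \<bar>f t\<bar> \<le> A" "\<And>t. t \<ge> T \<Longrightarrow> \<bar>g t\<bar> \<le> B"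
  shows "LIP (\<lambda>t. f t * g t) (A * N + B * M) T"
  unfolding LIP_def
proof (intro allI impI)
  fix s t assume st: "T \<le> s" "T \<le> t"
  have A0: "0 \<le> A" "0 \<le> B" using assms(3)[OF st(1)] assms(4)[OF st(1)] by linarith+
  have 1: "\<bar>f s - f t\<bar> \<le> M * \<bar>s - t\<bar>" "\<bar>g s - g t\<bar> \<le> N * \<bar>s - t\<bar>" using assms st unfolding LIP_def by auto
  have "f s * g s - f t * g t = f s * (g s - g t) + g t * (f s - f t)" by (simp add: algebra_simps)
  then have "\<bar>f s * g s - f t * g t\<bar> \<le> \<bar>f s\<bar> * \<bar>g s - g t\<bar> + \<bar>g t\<bar> * \<bar>f s - f t\<bar>"
    by (simp add: abs_mult[symmetric] abs_triangle_ineq)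
  also have "\<dots> \<le> A * (N * \<bar>s - t\<bar>) + B * (M * \<bar>s - t\<bar>)"
    using assms(3,4) st 1 A0 by (intro add_mono mult_mono) auto
  finally show "\<bar>f s * g s - f t * g t\<bar> \<le> (A * N + B * M) * \<bar>s - t\<bar>" by (simp add: algebra_simps)
qed

lemma LIP_sum:
  assumes "finite I" "\<And>i. i \<in> I \<Longrightarrow> LIP (f i) (M i) T"
  shows "LIP (\<lambda>t. \<Sum>i\<in>I. f i t) (\<Sum>i\<in>I. M i) T"
  using assms
proof (induction I rule: finite_induct)
  case empty then show ?case by (simp add: LIP_def)
next
  case (insert a I)
  then show ?case using LIP_add[of "f a" "M a" T "\<lambda>t. \<Sum>i\<in>I. f i t" "\<Sum>i\<in>I. M i"] by auto
qed

lemma LIP_mono: "LIP f M T \<Longrightarrow> M \<le> M' \<Longrightarrow> T \<le> T' \<Longrightarrow> LIP f M' T'"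
  unfolding LIP_def by (meson abs_ge_zero dual_order.trans mult_right_mono)

lemma barbalat:
  assumes d: "DW F f T" and lim: "(F \<longlongrightarrow> l) at_top" and lip: "LIP f M T" and M: "M > 0"
  shows "(f \<longlongrightarrow> 0) at_top"
proof (rule tendstoI)
  fix e :: real assume e: "e > 0"
  define \<delta> where "\<delta> = e / (2 * M)"
  have dp: "\<delta> > 0" using e M by (simp add: \<delta>_def)
  have "eventually (\<lambda>t. dist (F t) l < \<delta> * e / 4) at_top"
    using lim dp e by (intro tendstoD) auto
  then obtain N where N: "\<And>t. t \<ge> N \<Longrightarrow> \<bar>F t - l\<bar> < \<delta> * e / 4"
    by (auto simp: eventually_at_top_linorder dist_real_def)
  show "eventually (\<lambda>t. dist (f t) 0 < e) at_top"
    unfolding eventually_at_top_linorder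
  proof (intro exI[of _ "max N T"] allI impI)
    fix t assume t: "t \<ge> max N T"
    obtain \<xi> where xi: "\<xi> \<in> {t..t+\<delta>}" "F (t+\<delta>) - F t = f \<xi> * (t + \<delta> - t)"
      using DW_mvt[OF d, of t "t+\<delta>"] t dp by auto
    have "\<bar>F t - l\<bar> < \<delta> * e / 4" "\<bar>F (t+\<delta>) - l\<bar> < \<delta> * e / 4"
      using N[of t] N[of "t+\<delta>"] t dp by auto
    then have "\<bar>F (t+\<delta>) - F t\<bar> < \<delta> * e / 2" unfolding abs_less_iff by linarith
    then have "\<bar>f \<xi>\<bar> * \<delta> < \<delta> * e / 2" using xi by (simp add: abs_mult)
    then have fx: "\<bar>f \<xi>\<bar> < e / 2" using dp by (simp add: mult.commute)
    have "\<xi> \<ge> T" using xi t by auto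
    then have "\<bar>f t - f \<xi>\<bar> \<le> M * \<bar>t - \<xi>\<bar>" using lip t unfolding LIP_def by auto
    also have "\<dots> \<le> M * \<delta>" using xi M by (intro mult_left_mono) auto
    also have "\<dots> = e / 2" using M by (simp add: \<delta>_def)
    finally have "\<bar>f t - f \<xi>\<bar> \<le> e / 2" .
    then show "dist (f t) 0 < e" using fx unfolding dist_real_def by arith
  qed
qed

lemma dec_conv:
  fixes f :: "real \<Rightarrow> real"
  assumes dec: "\<And>s t. T \<le> s \<Longrightarrow> s \<le> t \<Longrightarrow> f t \<le> f s" and bd: "\<And>t. T \<le> t \<Longrightarrow> B \<le> f t"
  shows "\<exists>l. (f \<longlongrightarrow> l) at_top"
proof -
  define l where "l = Inf (f ` {T..})"
  have bdd: "bdd_below (f ` {T..})" using bd by (intro bdd_belowI2[where m=B]) auto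
  have ne: "f ` {T..} \<noteq> {}" by auto
  have "(f \<longlongrightarrow> l) at_top"
  proof (rule decreasing_tendsto)
    show "eventually (\<lambda>n. l \<le> f n) at_top"
      unfolding eventually_at_top_linorder l_def
      by (intro exI[of _ T] allI impI cInf_lower bdd) auto
    fix z assume "l < z"
    then obtain s where s: "s \<ge> T" "f s < z"
      unfolding l_def using cInf_lessD[OF ne] by force
    show "eventually (\<lambda>n. f n < z) at_top"
      unfolding eventually_at_top_linorder
      using dec s by (intro exI[of _ s]) (auto intro: le_less_trans)
  qed
  then show ?thesis by blast
qed


locale mgf =
  fixes x :: "'n::finite \<Rightarrow> real^'d::finite" and y :: "'n \<Rightarrow> real"
    and lam :: real
    and u v u' v' u'' v'' :: "real \<Rightarrow> real^'d"
    and Dinf :: "real^'d"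
  assumes lam_pos: "lam > 0"
    and du: "\<And>t. t \<ge> 0 \<Longrightarrow> (u has_vector_derivative u' t) (at t within {0..})"
    and dv: "\<And>t. t \<ge> 0 \<Longrightarrow> (v has_vector_derivative v' t) (at t within {0..})"
    and ddu: "\<And>t. t \<ge> 0 \<Longrightarrow> (u' has_vector_derivative u'' t) (at t within {0..})"
    and ddv: "\<And>t. t \<ge> 0 \<Longrightarrow> (v' has_vector_derivative v'' t) (at t within {0..})"
    and ode_u: "\<And>t. t \<ge> 0 \<Longrightarrow> lam *\<^sub>R u'' t + u' t + gradL x y (u t * v t) * v t = 0"
    and ode_v: "\<And>t. t \<ge> 0 \<Longrightarrow> lam *\<^sub>R v'' t + v' t + gradL x y (u t * v t) * u t = 0"
    and bdd_u: "bounded (u ` {0..})"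
    and bdd_v: "bounded (v ` {0..})"
    and Delta_lim: "((\<lambda>t. \<chi> i. \<bar>(u t $ i)\<^sup>2 - (v t $ i)\<^sup>2\<bar>) \<longlongrightarrow> Dinf) at_top"
    and Dinf_nz: "\<And>i. Dinf $ i \<noteq> 0"
begin

definition g :: "real \<Rightarrow> real^'d" where "g t = gradL x y (u t * v t)"

lemma gradL_comp: "gradL x y \<theta> $ k = - (1 / real CARD('n)) * (\<Sum>j\<in>UNIV. (y j - x j \<bullet> \<theta>) * x j $ k)"
  unfolding gradL_def by (simp add: sum_component)

lemma inner_comp: "x j \<bullet> \<theta> = (\<Sum>k\<in>UNIV. x j $ k * \<theta> $ k)"
  by (simp add: inner_vec_def)

lemma g_comp: "g t $ k = - (1 / real CARD('n)) * (\<Sum>j\<in>UNIV. (y j - (\<Sum>l\<in>UNIV. x j $ l * (u t $ l * v t $ l))) * x j $ k)"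
  unfolding g_def gradL_comp inner_comp by simp

lemma vcomp_deriv:
  assumes "(f has_vector_derivative f') (at t within S)"
  shows "((\<lambda>t. f t $ i) has_real_derivative f' $ i) (at t within S)"
  using bounded_linear.has_vector_derivative[OF bounded_linear_vec_nth assms]
  by (simp add: has_real_derivative_iff_has_vector_derivative)

lemma du_c: "t \<ge> 0 \<Longrightarrow> ((\<lambda>t. u t $ i) has_real_derivative u' t $ i) (at t within {0..})"
  using vcomp_deriv[OF du] .
lemma dv_c: "t \<ge> 0 \<Longrightarrow> ((\<lambda>t. v t $ i) has_real_derivative v' t $ i) (at t within {0..})"
  using vcomp_deriv[OF dv] .
lemma ddu_c: "t \<ge> 0 \<Longrightarrow> ((\<lambda>t. u' t $ i) has_real_derivative u'' t $ i) (at t within {0..})"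
  using vcomp_deriv[OF ddu] .
lemma ddv_c: "t \<ge> 0 \<Longrightarrow> ((\<lambda>t. v' t $ i) has_real_derivative v'' t $ i) (at t within {0..})"
  using vcomp_deriv[OF ddv] .

lemma ode_u_c: "t \<ge> 0 \<Longrightarrow> lam * u'' t $ i + u' t $ i + g t $ i * v t $ i = 0"
  using arg_cong[OF ode_u, of t "\<lambda>z. z $ i"] unfolding g_def by simp
lemma ode_v_c: "t \<ge> 0 \<Longrightarrow> lam * v'' t $ i + v' t $ i + g t $ i * u t $ i = 0"
  using arg_cong[OF ode_v, of t "\<lambda>z. z $ i"] unfolding g_def by simp

lemma u''_eq: "t \<ge> 0 \<Longrightarrow> u'' t $ i = - (u' t $ i + g t $ i * v t $ i) / lam"
  using ode_u_c[of t i] lam_pos by (simp add: field_simps)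
lemma v''_eq: "t \<ge> 0 \<Longrightarrow> v'' t $ i = - (v' t $ i + g t $ i * u t $ i) / lam"
  using ode_v_c[of t i] lam_pos by (simp add: field_simps)

lemma cont_u: "continuous_on {0..} u"
  unfolding continuous_on_eq_continuous_within by (intro ballI has_vector_derivative_continuous[OF du]) auto
lemma cont_v: "continuous_on {0..} v"
  unfolding continuous_on_eq_continuous_within by (intro ballI has_vector_derivative_continuous[OF dv]) auto

lemma cont_g: "continuous_on {0..} g"
proof -
  have "continuous_on {0..} (\<lambda>t. u t * v t)"
  proof -
    have "continuous_on {0..} (\<lambda>t. \<chi> i. u t $ i * v t $ i)"
      using cont_u cont_v by (intro continuous_intros)
    moreover have "(\<lambda>t. \<chi> i. u t $ i * v t $ i) = (\<lambda>t. u t * v t)" by (auto simp: vec_eq_iff)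
    ultimately show ?thesis by metis
  qed
  then show ?thesis unfolding g_def gradL_def by (intro continuous_intros)
qed

lemma bnd_u: obtains B where "B > 0" "\<And>t i. t \<ge> 0 \<Longrightarrow> \<bar>u t $ i\<bar> \<le> B"
proof -
  obtain B where B: "B > 0" "\<And>z. z \<in> u ` {0..} \<Longrightarrow> norm z \<le> B" using bdd_u bounded_pos by metis
  show ?thesis
  proof (rule that[OF B(1)])
    fix t :: real and i assume "t \<ge> 0"
    then have "norm (u t) \<le> B" using B by auto
    then show "\<bar>u t $ i\<bar> \<le> B" using component_le_norm_cart[of "u t" i] by linarith
  qed
qed
lemma bnd_v: obtains B where "B > 0" "\<And>t i. t \<ge> 0 \<Longrightarrow> \<bar>v t $ i\<bar> \<le> B"
proof -
  obtain B where B: "B > 0" "\<And>z. z \<in> v ` {0..} \<Longrightarrow> norm z \<le> B" using bdd_v bounded_pos by metis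
  show ?thesis
  proof (rule that[OF B(1)])
    fix t :: real and i assume "t \<ge> 0"
    then have "norm (v t) \<le> B" using B by auto
    then show "\<bar>v t $ i\<bar> \<le> B" using component_le_norm_cart[of "v t" i] by linarith
  qed
qed

end


lemma LIP_const: "LIP (\<lambda>t. c) 0 T" unfolding LIP_def by simp

lemma LIP_cong: "LIP h M T \<Longrightarrow> (\<And>t. t \<ge> T \<Longrightarrow> f t = h t) \<Longrightarrow> LIP f M T"
  unfolding LIP_def by auto

lemma sq_bound_abs: assumes "(a::real)\<^sup>2 \<le> C" shows "\<bar>a\<bar> \<le> 1 + C"
proof (cases "\<bar>a\<bar> \<le> 1")
  case True then show ?thesis using \<open>a\<^sup>2 \<le> C\<close> by (smt (verit) zero_le_power2)
next
  case False
  then have "\<bar>a\<bar> \<le> \<bar>a\<bar> * \<bar>a\<bar>" by (intro mult_le_cancel_left1[THEN iffD2]) auto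
  then show ?thesis using \<open>a\<^sup>2 \<le> C\<close> by (simp add: power2_eq_square abs_mult_self_eq)
qed

lemma sum_abs_bound:
  fixes f :: "'i::finite \<Rightarrow> real"
  assumes "\<And>k. \<bar>f k\<bar> \<le> M"
  shows "\<bar>\<Sum>k\<in>UNIV. f k\<bar> \<le> real CARD('i) * M"
proof -
  have "\<bar>\<Sum>k\<in>UNIV. f k\<bar> \<le> (\<Sum>k\<in>UNIV. \<bar>f k\<bar>)" by (rule sum_abs)
  also have "\<dots> \<le> real CARD('i) * M" using sum_bounded_above[of UNIV "\<lambda>k. \<bar>f k\<bar>" M] assms by simp
  finally show ?thesis .
qed

context mgf begin

lemma bnd_g: obtains B where "B > 0" "\<And>t k. t \<ge> 0 \<Longrightarrow> \<bar>g t $ k\<bar> \<le> B"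
proof -
  obtain Bu where Bu: "Bu > 0" "\<And>t i. t \<ge> 0 \<Longrightarrow> \<bar>u t $ i\<bar> \<le> Bu" using bnd_u by blast
  obtain Bv where Bv: "Bv > 0" "\<And>t i. t \<ge> 0 \<Longrightarrow> \<bar>v t $ i\<bar> \<le> Bv" using bnd_v by blast
  define S where "S = cbox (- (\<chi> i. Bu * Bv)) ((\<chi> i. Bu * Bv) :: real^'d)"
  have "continuous_on S (gradL x y)" unfolding gradL_def by (intro continuous_intros)
  then have "compact (gradL x y ` S)" unfolding S_def by (intro compact_continuous_image) auto
  then obtain B where B: "B > 0" "\<And>z. z \<in> gradL x y ` S \<Longrightarrow> norm z \<le> B"
    using compact_imp_bounded bounded_pos by metis
  show ?thesis
  proof (rule that[OF B(1)])
    fix t :: real and k assume t: "t \<ge> 0"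
    have "\<bar>u t $ i * v t $ i\<bar> \<le> Bu * Bv" for i
      unfolding abs_mult using Bu(1) Bu(2)[OF t] Bv(2)[OF t] by (intro mult_mono) auto
    then have "u t * v t \<in> S" unfolding S_def mem_box_cart by (simp add: abs_le_iff) (meson minus_le_iff)
    then have "norm (g t) \<le> B" unfolding g_def using B by auto
    then show "\<bar>g t $ k\<bar> \<le> B" using component_le_norm_cart[of "g t" k] by linarith
  qed
qed

definition thd :: "real \<Rightarrow> 'd \<Rightarrow> real" where
  "thd t l = u' t $ l * v t $ l + u t $ l * v' t $ l"
definition Ls :: "real \<Rightarrow> real" where
  "Ls t = (1 / (2 * real CARD('n))) * (\<Sum>j\<in>UNIV. (y j - (\<Sum>l\<in>UNIV. x j $ l * (u t $ l * v t $ l)))\<^sup>2)"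
definition Kin :: "real \<Rightarrow> real" where
  "Kin t = (\<Sum>k\<in>UNIV. (u' t $ k)\<^sup>2 + (v' t $ k)\<^sup>2)"
definition En :: "real \<Rightarrow> real" where
  "En t = Ls t + lam / 2 * Kin t"

lemma d_th: "t \<ge> 0 \<Longrightarrow> ((\<lambda>t. u t $ l * v t $ l) has_real_derivative thd t l) (at t within {0..})"
  unfolding thd_def using DERIV_mult[OF du_c dv_c, of t l l] by (simp add: algebra_simps)

lemma d_Ls: "t \<ge> 0 \<Longrightarrow> (Ls has_real_derivative (\<Sum>k\<in>UNIV. g t $ k * thd t k)) (at t within {0..})"
proof -
  assume t: "t \<ge> 0"
  define r where "r j = y j - (\<Sum>l\<in>UNIV. x j $ l * (u t $ l * v t $ l))" for j
  define c where "c = 1 / real CARD('n)"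
  have dS: "((\<lambda>t. y j - (\<Sum>l\<in>UNIV. x j $ l * (u t $ l * v t $ l))) has_real_derivative
      0 - (\<Sum>l\<in>UNIV. x j $ l * thd t l)) (at t within {0..})" for j
    by (intro DERIV_diff DERIV_const DERIV_sum DERIV_cmult d_th t)
  have "(Ls has_real_derivative (1 / (2 * real CARD('n))) * (\<Sum>j\<in>UNIV. of_nat 2 * ((0 - (\<Sum>l\<in>UNIV. x j $ l * thd t l)) * r j ^ (2 - Suc 0)))) (at t within {0..})"
    unfolding Ls_def r_def by (intro DERIV_cmult DERIV_sum DERIV_power dS)
  moreover have "(1 / (2 * real CARD('n))) * (\<Sum>j\<in>UNIV. of_nat 2 * ((0 - (\<Sum>l\<in>UNIV. x j $ l * thd t l)) * r j ^ (2 - Suc 0)))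
      = - c * (\<Sum>j\<in>UNIV. \<Sum>l\<in>UNIV. r j * x j $ l * thd t l)"
    by (simp add: c_def sum_distrib_left sum_distrib_right algebra_simps sum_negf)
  moreover have "(\<Sum>k\<in>UNIV. g t $ k * thd t k) = - c * (\<Sum>k\<in>UNIV. \<Sum>j\<in>UNIV. r j * x j $ k * thd t k)"
    unfolding g_comp r_def[symmetric] c_def
    by (simp add: sum_distrib_left sum_distrib_right algebra_simps sum_negf)
  moreover have "(\<Sum>k\<in>UNIV. \<Sum>j\<in>UNIV. r j * x j $ k * thd t k) = (\<Sum>j\<in>UNIV. \<Sum>l\<in>UNIV. r j * x j $ l * thd t l)"
    by (rule sum.swap)
  ultimately show ?thesis by simp
qed

lemma d_Kin: "t \<ge> 0 \<Longrightarrow> (Kin has_real_derivative (\<Sum>k\<in>UNIV. 2 * u' t $ k * u'' t $ k + 2 * v' t $ k * v'' t $ k)) (at t within {0..})"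
proof -
  assume t: "t \<ge> 0"
  have "(Kin has_real_derivative (\<Sum>k\<in>UNIV. of_nat 2 * (u'' t $ k * u' t $ k ^ (2 - Suc 0)) + of_nat 2 * (v'' t $ k * v' t $ k ^ (2 - Suc 0)))) (at t within {0..})"
    unfolding Kin_def by (intro DERIV_sum DERIV_add DERIV_power ddu_c ddv_c t)
  then show ?thesis by (simp add: algebra_simps)
qed

lemma d_En: "t \<ge> 0 \<Longrightarrow> (En has_real_derivative - Kin t) (at t within {0..})"
proof -
  assume t: "t \<ge> 0"
  have "(En has_real_derivative (\<Sum>k\<in>UNIV. g t $ k * thd t k) + lam / 2 * (\<Sum>k\<in>UNIV. 2 * u' t $ k * u'' t $ k + 2 * v' t $ k * v'' t $ k)) (at t within {0..})"
    unfolding En_def by (intro DERIV_add DERIV_cmult d_Ls d_Kin t)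
  moreover have "(\<Sum>k\<in>UNIV. g t $ k * thd t k) + lam / 2 * (\<Sum>k\<in>UNIV. 2 * u' t $ k * u'' t $ k + 2 * v' t $ k * v'' t $ k)
     = (\<Sum>k\<in>UNIV. g t $ k * thd t k + u' t $ k * (lam * u'' t $ k) + v' t $ k * (lam * v'' t $ k))"
    by (simp add: sum_distrib_left sum.distrib algebra_simps)
  moreover have "\<dots> = (\<Sum>k\<in>UNIV. - ((u' t $ k)\<^sup>2 + (v' t $ k)\<^sup>2))"
  proof (rule sum.cong[OF refl])
    fix k
    have a: "lam * u'' t $ k = - u' t $ k - g t $ k * v t $ k" using ode_u_c[OF t, of k] by linarith
    have b: "lam * v'' t $ k = - v' t $ k - g t $ k * u t $ k" using ode_v_c[OF t, of k] by linarith
    show "g t $ k * thd t k + u' t $ k * (lam * u'' t $ k) + v' t $ k * (lam * v'' t $ k) = - ((u' t $ k)\<^sup>2 + (v' t $ k)\<^sup>2)"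
      unfolding a b thd_def by (simp add: algebra_simps power2_eq_square)
  qed
  moreover have "\<dots> = - Kin t" unfolding Kin_def by (simp only: sum_negf)
  ultimately show ?thesis by simp
qed

lemma Kin_nonneg: "Kin t \<ge> 0" unfolding Kin_def by (intro sum_nonneg) auto
lemma En_nonneg: "En t \<ge> 0"
  unfolding En_def Ls_def using Kin_nonneg[of t] lam_pos by (intro add_nonneg_nonneg mult_nonneg_nonneg sum_nonneg) auto

lemma DW_En: "DW En (\<lambda>t. - Kin t) 0" unfolding DW_def using d_En by auto

lemma En_dec: "0 \<le> s \<Longrightarrow> s \<le> t \<Longrightarrow> En t \<le> En s"
  using DW_nonpos_dec[OF DW_En] Kin_nonneg by auto

lemma Ls_nonneg: "Ls t \<ge> 0"
  unfolding Ls_def by (intro mult_nonneg_nonneg sum_nonneg) auto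

lemma bnd_u': obtains B where "B > 0" "\<And>t k. t \<ge> 0 \<Longrightarrow> \<bar>u' t $ k\<bar> \<le> B \<and> \<bar>v' t $ k\<bar> \<le> B"
proof -
  define C where "C = 2 * En 0 / lam"
  have h: "(u' t $ k)\<^sup>2 \<le> C \<and> (v' t $ k)\<^sup>2 \<le> C" if t: "t \<ge> 0" for t k
  proof -
    have 1: "(u' t $ k)\<^sup>2 + (v' t $ k)\<^sup>2 \<le> Kin t" unfolding Kin_def
      by (rule member_le_sum[where f="\<lambda>k. (u' t $ k)\<^sup>2 + (v' t $ k)\<^sup>2"]) auto
    have "En t \<le> En 0" using En_dec[OF order_refl t] .
    then have "lam / 2 * Kin t \<le> En 0" unfolding En_def using Ls_nonneg[of t] by linarith
    then have "Kin t \<le> C" unfolding C_def using lam_pos by (simp add: field_simps)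
    then show ?thesis using 1 zero_le_power2[of "u' t $ k"] zero_le_power2[of "v' t $ k"]
      by (intro conjI) linarith+
  qed
  have m: "\<bar>u' t $ k\<bar> \<le> 1 + C \<and> \<bar>v' t $ k\<bar> \<le> 1 + C" if "t \<ge> 0" for t k
    using h[OF that, of k] by (simp add: sq_bound_abs)
  have p: "1 + C > 0" unfolding C_def using En_nonneg[of 0] lam_pos by (auto intro!: add_pos_nonneg divide_nonneg_pos)
  show ?thesis by (rule that[OF p m])
qed

end


definition LIPE :: "(real \<Rightarrow> real) \<Rightarrow> real \<Rightarrow> bool" where
  "LIPE f T \<longleftrightarrow> (\<exists>M. LIP f M T)"
definition BND :: "(real \<Rightarrow> real) \<Rightarrow> real \<Rightarrow> bool" where
  "BND f T \<longleftrightarrow> (\<exists>A. \<forall>t\<ge>T. \<bar>f t\<bar> \<le> A)"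

lemma LIPE_const: "LIPE (\<lambda>t. c) T" unfolding LIPE_def using LIP_const by blast
lemma LIPE_add: "LIPE f T \<Longrightarrow> LIPE g T \<Longrightarrow> LIPE (\<lambda>t. f t + g t) T"
  unfolding LIPE_def using LIP_add by blast
lemma LIPE_cmult: "LIPE f T \<Longrightarrow> LIPE (\<lambda>t. c * f t) T"
  unfolding LIPE_def using LIP_cmult by blast
lemma LIPE_multc: "LIPE f T \<Longrightarrow> LIPE (\<lambda>t. f t * c) T"
  using LIPE_cmult[of f T c] by (simp add: mult.commute)
lemma LIPE_diff: "LIPE f T \<Longrightarrow> LIPE g T \<Longrightarrow> LIPE (\<lambda>t. f t - g t) T"
  using LIPE_add[of f T "\<lambda>t. (-1) * g t"] LIPE_cmult[of g T "-1"] by simp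
lemma LIPE_mult: "LIPE f T \<Longrightarrow> LIPE g T \<Longrightarrow> BND f T \<Longrightarrow> BND g T \<Longrightarrow> LIPE (\<lambda>t. f t * g t) T"
proof -
  assume "LIPE f T" "LIPE g T" "BND f T" "BND g T"
  then obtain M N A B where "LIP f M T" "LIP g N T" "\<forall>t\<ge>T. \<bar>f t\<bar> \<le> A" "\<forall>t\<ge>T. \<bar>g t\<bar> \<le> B"
    unfolding LIPE_def BND_def by blast
  then have "LIP (\<lambda>t. f t * g t) (A * N + B * M) T" by (intro LIP_mult) auto
  then show ?thesis unfolding LIPE_def by blast
qed
lemma LIPE_sum: "finite I \<Longrightarrow> (\<And>i. i \<in> I \<Longrightarrow> LIPE (f i) T) \<Longrightarrow> LIPE (\<lambda>t. \<Sum>i\<in>I. f i t) T"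
proof (induction I rule: finite_induct)
  case empty then show ?case using LIPE_const[of 0 T] by simp
next
  case (insert a I) then show ?case using LIPE_add[of "f a" T "\<lambda>t. \<Sum>i\<in>I. f i t"] by simp
qed
lemma LIPE_cong: "LIPE h T \<Longrightarrow> (\<And>t. t \<ge> T \<Longrightarrow> f t = h t) \<Longrightarrow> LIPE f T"
  unfolding LIPE_def using LIP_cong by blast
lemma DW_LIPE: "DW f f' T \<Longrightarrow> (\<And>t. t \<ge> T \<Longrightarrow> \<bar>f' t\<bar> \<le> M) \<Longrightarrow> LIPE f T"
  unfolding LIPE_def using DW_LIP by blast

lemma barbalat':
  assumes "DW F f T" "(F \<longlongrightarrow> l) at_top" "LIPE f T"
  shows "(f \<longlongrightarrow> 0) at_top"
proof -
  obtain M where "LIP f M T" using assms(3) unfolding LIPE_def by blast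
  then have "LIP f (max M 1) T" by (rule LIP_mono) auto
  then show ?thesis by (rule barbalat[OF assms(1,2)]) simp
qed

lemma tendsto_sq_zero: "((\<lambda>t. (f t)\<^sup>2) \<longlongrightarrow> 0) F \<Longrightarrow> ((\<lambda>t. f t :: real) \<longlongrightarrow> 0) F"
proof -
  assume "((\<lambda>t. (f t)\<^sup>2) \<longlongrightarrow> 0) F"
  then have "((\<lambda>t. sqrt ((f t)\<^sup>2)) \<longlongrightarrow> sqrt 0) F" by (intro tendsto_intros)
  then have "((\<lambda>t. \<bar>f t\<bar>) \<longlongrightarrow> 0) F" by simp
  then show ?thesis by (simp add: tendsto_rabs_zero_iff)
qed

context mgf begin

lemma En_conv: "\<exists>l. (En \<longlongrightarrow> l) at_top"
  by (rule dec_conv[where T=0 and B=0]) (simp_all add: En_dec En_nonneg)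

lemma bnd_u'': obtains B where "B > 0" "\<And>t k. t \<ge> 0 \<Longrightarrow> \<bar>u'' t $ k\<bar> \<le> B \<and> \<bar>v'' t $ k\<bar> \<le> B"
proof -
  obtain Bu where Bu: "Bu > 0" "\<And>t i. t \<ge> 0 \<Longrightarrow> \<bar>u t $ i\<bar> \<le> Bu" using bnd_u by blast
  obtain Bv where Bv: "Bv > 0" "\<And>t i. t \<ge> 0 \<Longrightarrow> \<bar>v t $ i\<bar> \<le> Bv" using bnd_v by blast
  obtain Bg where Bg: "Bg > 0" "\<And>t i. t \<ge> 0 \<Longrightarrow> \<bar>g t $ i\<bar> \<le> Bg" using bnd_g by blast
  obtain Bd where Bd: "Bd > 0" "\<And>t k. t \<ge> 0 \<Longrightarrow> \<bar>u' t $ k\<bar> \<le> Bd \<and> \<bar>v' t $ k\<bar> \<le> Bd" using bnd_u' by blast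
  define B where "B = (Bd + Bg * (Bu + Bv)) / lam"
  have m: "\<bar>u'' t $ k\<bar> \<le> B \<and> \<bar>v'' t $ k\<bar> \<le> B" if t: "t \<ge> 0" for t k
  proof -
    have uv: "\<bar>v t $ k\<bar> \<le> Bu + Bv" "\<bar>u t $ k\<bar> \<le> Bu + Bv"
      using Bu(2)[OF t, of k] Bv(2)[OF t, of k] Bu(1) Bv(1) by linarith+
    have 1: "\<bar>g t $ k * v t $ k\<bar> \<le> Bg * (Bu + Bv)" "\<bar>g t $ k * u t $ k\<bar> \<le> Bg * (Bu + Bv)"
      unfolding abs_mult using Bg t uv by (auto intro!: mult_mono)
    have a: "\<bar>u' t $ k + g t $ k * v t $ k\<bar> \<le> Bd + Bg * (Bu + Bv)" "\<bar>v' t $ k + g t $ k * u t $ k\<bar> \<le> Bd + Bg * (Bu + Bv)"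
      using 1 Bd(2)[OF t, of k] abs_triangle_ineq[of "u' t $ k" "g t $ k * v t $ k"]
        abs_triangle_ineq[of "v' t $ k" "g t $ k * u t $ k"] by linarith+
    have b: "\<bar>u'' t $ k\<bar> = \<bar>u' t $ k + g t $ k * v t $ k\<bar> / lam" "\<bar>v'' t $ k\<bar> = \<bar>v' t $ k + g t $ k * u t $ k\<bar> / lam"
      unfolding u''_eq[OF t] v''_eq[OF t] using lam_pos by (simp_all add: abs_div)
    show ?thesis unfolding b B_def using a lam_pos by (intro conjI divide_right_mono) auto
  qed
  have p: "B > 0" unfolding B_def using Bd Bg Bu Bv lam_pos by (simp add: add_pos_pos)
  show ?thesis by (rule that[OF p m])
qed

lemma Kin_lim: "(Kin \<longlongrightarrow> 0) at_top"
proof -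
  obtain Bd where Bd: "Bd > 0" "\<And>t k. t \<ge> 0 \<Longrightarrow> \<bar>u' t $ k\<bar> \<le> Bd \<and> \<bar>v' t $ k\<bar> \<le> Bd" using bnd_u' by blast
  obtain B2 where B2: "B2 > 0" "\<And>t k. t \<ge> 0 \<Longrightarrow> \<bar>u'' t $ k\<bar> \<le> B2 \<and> \<bar>v'' t $ k\<bar> \<le> B2" using bnd_u'' by blast
  obtain l where l: "(En \<longlongrightarrow> l) at_top" using En_conv by blast
  define K' where "K' t = - (\<Sum>k\<in>UNIV. 2 * u' t $ k * u'' t $ k + 2 * v' t $ k * v'' t $ k)" for t
  have "DW (\<lambda>t. - Kin t) K' 0" unfolding DW_def K'_def using d_Kin by (auto intro: DERIV_minus)
  moreover have "\<bar>K' t\<bar> \<le> real CARD('d) * (4 * Bd * B2)" if t: "t \<ge> 0" for t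
  proof -
    have "\<bar>2 * u' t $ k * u'' t $ k + 2 * v' t $ k * v'' t $ k\<bar> \<le> 4 * Bd * B2" for k
    proof -
      have "\<bar>u' t $ k * u'' t $ k\<bar> \<le> Bd * B2" "\<bar>v' t $ k * v'' t $ k\<bar> \<le> Bd * B2"
        unfolding abs_mult using Bd B2 t by (auto intro!: mult_mono)
      moreover have "\<bar>2 * u' t $ k * u'' t $ k + 2 * v' t $ k * v'' t $ k\<bar> \<le> 2 * (\<bar>u' t $ k\<bar> * \<bar>u'' t $ k\<bar>) + 2 * (\<bar>v' t $ k\<bar> * \<bar>v'' t $ k\<bar>)"
        using abs_triangle_ineq[of "2 * u' t $ k * u'' t $ k" "2 * v' t $ k * v'' t $ k"] by (simp add: abs_mult)
      ultimately show ?thesis unfolding abs_mult by linarith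
    qed
    then show ?thesis unfolding K'_def abs_minus_cancel by (rule sum_abs_bound)
  qed
  ultimately have "LIPE (\<lambda>t. - Kin t) 0" by (rule DW_LIPE)
  then have "((\<lambda>t. - Kin t) \<longlongrightarrow> 0) at_top" using barbalat'[OF DW_En l] by blast
  from tendsto_minus[OF this] have "((\<lambda>t. - (- Kin t)) \<longlongrightarrow> - 0) at_top" .
  then show ?thesis by (simp only: minus_minus minus_zero)
qed

lemma u'_lim: "((\<lambda>t. u' t $ k) \<longlongrightarrow> 0) at_top" and v'_lim: "((\<lambda>t. v' t $ k) \<longlongrightarrow> 0) at_top"
proof -
  have le: "(u' t $ k)\<^sup>2 \<le> Kin t" "(v' t $ k)\<^sup>2 \<le> Kin t" for t
  proof -
    have "(u' t $ k)\<^sup>2 + (v' t $ k)\<^sup>2 \<le> Kin t" unfolding Kin_def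
      by (rule member_le_sum[where f="\<lambda>k. (u' t $ k)\<^sup>2 + (v' t $ k)\<^sup>2"]) auto
    then show "(u' t $ k)\<^sup>2 \<le> Kin t" "(v' t $ k)\<^sup>2 \<le> Kin t"
      using zero_le_power2[of "u' t $ k"] zero_le_power2[of "v' t $ k"] by linarith+
  qed
  show "((\<lambda>t. u' t $ k) \<longlongrightarrow> 0) at_top"
    by (rule tendsto_sq_zero, rule tendsto_sandwich[OF _ _ tendsto_const Kin_lim]) (use le in auto)
  show "((\<lambda>t. v' t $ k) \<longlongrightarrow> 0) at_top"
    by (rule tendsto_sq_zero, rule tendsto_sandwich[OF _ _ tendsto_const Kin_lim]) (use le in auto)
qed

end


context mgf begin

lemma DW_u: "DW (\<lambda>t. u t $ l) (\<lambda>t. u' t $ l) 0" unfolding DW_def using du_c by auto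
lemma DW_v: "DW (\<lambda>t. v t $ l) (\<lambda>t. v' t $ l) 0" unfolding DW_def using dv_c by auto
lemma DW_u': "DW (\<lambda>t. u' t $ l) (\<lambda>t. u'' t $ l) 0" unfolding DW_def using ddu_c by auto
lemma DW_v': "DW (\<lambda>t. v' t $ l) (\<lambda>t. v'' t $ l) 0" unfolding DW_def using ddv_c by auto

lemma BND_u: "BND (\<lambda>t. u t $ l) 0"
proof -
  obtain B where "B > 0" "\<And>t i. t \<ge> 0 \<Longrightarrow> \<bar>u t $ i\<bar> \<le> B" using bnd_u by blast
  then show ?thesis unfolding BND_def by blast
qed
lemma BND_v: "BND (\<lambda>t. v t $ l) 0"
proof -
  obtain B where "B > 0" "\<And>t i. t \<ge> 0 \<Longrightarrow> \<bar>v t $ i\<bar> \<le> B" using bnd_v by blast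
  then show ?thesis unfolding BND_def by blast
qed
lemma BND_g: "BND (\<lambda>t. g t $ l) 0"
proof -
  obtain B where "B > 0" "\<And>t i. t \<ge> 0 \<Longrightarrow> \<bar>g t $ i\<bar> \<le> B" using bnd_g by blast
  then show ?thesis unfolding BND_def by blast
qed

lemma LIPE_u: "LIPE (\<lambda>t. u t $ l) 0"
proof -
  obtain Bd where Bd: "Bd > 0" "\<And>t k. t \<ge> 0 \<Longrightarrow> \<bar>u' t $ k\<bar> \<le> Bd \<and> \<bar>v' t $ k\<bar> \<le> Bd" using bnd_u' by blast
  show ?thesis by (rule DW_LIPE[OF DW_u]) (use Bd in auto)
qed
lemma LIPE_v: "LIPE (\<lambda>t. v t $ l) 0"
proof -
  obtain Bd where Bd: "Bd > 0" "\<And>t k. t \<ge> 0 \<Longrightarrow> \<bar>u' t $ k\<bar> \<le> Bd \<and> \<bar>v' t $ k\<bar> \<le> Bd" using bnd_u' by blast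
  show ?thesis by (rule DW_LIPE[OF DW_v]) (use Bd in auto)
qed
lemma LIPE_u': "LIPE (\<lambda>t. u' t $ l) 0"
proof -
  obtain B where B: "B > 0" "\<And>t k. t \<ge> 0 \<Longrightarrow> \<bar>u'' t $ k\<bar> \<le> B \<and> \<bar>v'' t $ k\<bar> \<le> B" using bnd_u'' by blast
  show ?thesis by (rule DW_LIPE[OF DW_u']) (use B in auto)
qed
lemma LIPE_v': "LIPE (\<lambda>t. v' t $ l) 0"
proof -
  obtain B where B: "B > 0" "\<And>t k. t \<ge> 0 \<Longrightarrow> \<bar>u'' t $ k\<bar> \<le> B \<and> \<bar>v'' t $ k\<bar> \<le> B" using bnd_u'' by blast
  show ?thesis by (rule DW_LIPE[OF DW_v']) (use B in auto)
qed

lemma LIPE_th: "LIPE (\<lambda>t. u t $ l * v t $ l) 0"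
  by (rule LIPE_mult[OF LIPE_u LIPE_v BND_u BND_v])

lemma LIPE_g: "LIPE (\<lambda>t. g t $ k) 0"
proof -
  have "LIPE (\<lambda>t. - (1 / real CARD('n)) * (\<Sum>j\<in>UNIV. (y j - (\<Sum>l\<in>UNIV. x j $ l * (u t $ l * v t $ l))) * x j $ k)) 0"
  proof (rule LIPE_cmult, rule LIPE_sum)
    fix j
    show "LIPE (\<lambda>t. (y j - (\<Sum>l\<in>UNIV. x j $ l * (u t $ l * v t $ l))) * x j $ k) 0"
    proof (rule LIPE_multc, rule LIPE_diff[OF LIPE_const], rule LIPE_sum)
      fix l show "LIPE (\<lambda>t. x j $ l * (u t $ l * v t $ l)) 0" by (rule LIPE_cmult[OF LIPE_th])
    qed simp
  qed simp
  then show ?thesis unfolding g_comp .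
qed

lemma LIPE_u'': "LIPE (\<lambda>t. u'' t $ k) 0"
proof -
  have "LIPE (\<lambda>t. (- 1 / lam) * (u' t $ k + g t $ k * v t $ k)) 0"
    by (intro LIPE_cmult LIPE_add LIPE_u' LIPE_mult LIPE_g LIPE_v BND_g BND_v)
  then show ?thesis by (rule LIPE_cong) (use lam_pos in \<open>simp add: u''_eq field_simps\<close>)
qed
lemma LIPE_v'': "LIPE (\<lambda>t. v'' t $ k) 0"
proof -
  have "LIPE (\<lambda>t. (- 1 / lam) * (v' t $ k + g t $ k * u t $ k)) 0"
    by (intro LIPE_cmult LIPE_add LIPE_v' LIPE_mult LIPE_g LIPE_u BND_g BND_u)
  then show ?thesis by (rule LIPE_cong) (use lam_pos in \<open>simp add: v''_eq field_simps\<close>)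
qed

lemma u''_lim: "((\<lambda>t. u'' t $ k) \<longlongrightarrow> 0) at_top"
  by (rule barbalat'[OF DW_u' u'_lim LIPE_u''])
lemma v''_lim: "((\<lambda>t. v'' t $ k) \<longlongrightarrow> 0) at_top"
  by (rule barbalat'[OF DW_v' v'_lim LIPE_v''])

lemma gv_lim: "((\<lambda>t. g t $ k * v t $ k) \<longlongrightarrow> 0) at_top"
proof -
  have "((\<lambda>t. - lam * u'' t $ k - u' t $ k) \<longlongrightarrow> - lam * 0 - 0) at_top"
    by (intro tendsto_intros u''_lim u'_lim)
  moreover have "eventually (\<lambda>t. - lam * u'' t $ k - u' t $ k = g t $ k * v t $ k) at_top"
    unfolding eventually_at_top_linorder
  proof (intro exI[of _ 0] allI impI)
    fix n :: real assume "n \<ge> 0"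
    from ode_u_c[OF this, of k] show "- lam * u'' n $ k - u' n $ k = g n $ k * v n $ k" by linarith
  qed
  ultimately show ?thesis by (simp add: tendsto_cong)
qed
lemma gu_lim: "((\<lambda>t. g t $ k * u t $ k) \<longlongrightarrow> 0) at_top"
proof -
  have "((\<lambda>t. - lam * v'' t $ k - v' t $ k) \<longlongrightarrow> - lam * 0 - 0) at_top"
    by (intro tendsto_intros v''_lim v'_lim)
  moreover have "eventually (\<lambda>t. - lam * v'' t $ k - v' t $ k = g t $ k * u t $ k) at_top"
    unfolding eventually_at_top_linorder
  proof (intro exI[of _ 0] allI impI)
    fix n :: real assume "n \<ge> 0"
    from ode_v_c[OF this, of k] show "- lam * v'' n $ k - v' n $ k = g n $ k * u n $ k" by linarith
  qed
  ultimately show ?thesis by (simp add: tendsto_cong)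
qed

lemma Delta_c: "((\<lambda>t. \<bar>(u t $ k)\<^sup>2 - (v t $ k)\<^sup>2\<bar>) \<longlongrightarrow> Dinf $ k) at_top"
  using tendsto_vec_nth[OF Delta_lim, of k] by simp

lemma Dinf_pos: "Dinf $ k > 0"
proof -
  have "Dinf $ k \<ge> 0"
    by (rule tendsto_lowerbound[OF Delta_c]) auto
  then show ?thesis using Dinf_nz[of k] by linarith
qed

lemma Delta_ev: "eventually (\<lambda>t. \<bar>(u t $ k)\<^sup>2 - (v t $ k)\<^sup>2\<bar> > Dinf $ k / 2) at_top"
  using order_tendstoD(1)[OF Delta_c, of "Dinf $ k / 2"] Dinf_pos[of k] by simp

lemma g_lim_c: "((\<lambda>t. g t $ k) \<longlongrightarrow> 0) at_top"
proof -
  define d where "d = Dinf $ k"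
  have d: "d > 0" using Dinf_pos d_def by simp
  have lim: "((\<lambda>t. 2 / d * ((g t $ k * u t $ k)\<^sup>2 + (g t $ k * v t $ k)\<^sup>2)) \<longlongrightarrow> 2 / d * (0\<^sup>2 + 0\<^sup>2)) at_top"
    by (intro tendsto_intros gu_lim gv_lim)
  have ev: "eventually (\<lambda>t. (g t $ k)\<^sup>2 \<le> 2 / d * ((g t $ k * u t $ k)\<^sup>2 + (g t $ k * v t $ k)\<^sup>2)) at_top"
    using Delta_ev[of k]
  proof eventually_elim
    case (elim t)
    then have "d / 2 \<le> (u t $ k)\<^sup>2 + (v t $ k)\<^sup>2" unfolding d_def by (smt (verit) zero_le_power2)
    then have "(g t $ k)\<^sup>2 * (d / 2) \<le> (g t $ k)\<^sup>2 * ((u t $ k)\<^sup>2 + (v t $ k)\<^sup>2)"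
      by (intro mult_left_mono) auto
    then show ?case using d by (simp add: field_simps power_mult_distrib)
  qed
  have "((\<lambda>t. (g t $ k)\<^sup>2) \<longlongrightarrow> 0) at_top"
    by (rule tendsto_sandwich[OF _ ev tendsto_const]) (use lim in auto)
  then show ?thesis by (rule tendsto_sq_zero)
qed

lemma g_lim: "(g \<longlongrightarrow> 0) at_top"
  by (rule vec_tendstoI) (use g_lim_c in simp)

end


lemma Q_deriv:
  fixes G W W' :: "real \<Rightarrow> real"
  assumes dG: "(G has_real_derivative gg) (at t within S)"
    and dW: "(W has_real_derivative W' t) (at t within S)"
    and dW': "(W' has_real_derivative W'') (at t within S)"
    and nz: "W t \<noteq> 0"
    and ode: "lam * W'' = - W' t - gg * W t"
  shows "((\<lambda>s. G s + lam * (W' s / W s) + ln ((W s)\<^sup>2) / 2) has_real_derivative (- lam * (W' t / W t)\<^sup>2)) (at t within S)"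
proof -
  have pos: "0 < (W t)\<^sup>2" using nz by simp
  have dW2: "((\<lambda>s. (W s)\<^sup>2) has_real_derivative of_nat 2 * (W' t * W t ^ (2 - Suc 0))) (at t within S)"
    by (rule DERIV_power[OF dW])
  have dl: "((\<lambda>s. ln ((W s)\<^sup>2)) has_real_derivative 1 / (W t)\<^sup>2 * (of_nat 2 * (W' t * W t ^ (2 - Suc 0)))) (at t within S)"
    by (rule DERIV_chain2[OF DERIV_ln_divide[OF pos] dW2])
  have "((\<lambda>s. G s + lam * (W' s / W s) + ln ((W s)\<^sup>2) / 2) has_real_derivative
     gg + lam * ((W'' * W t - W' t * W' t) / (W t * W t)) + (1 / (W t)\<^sup>2 * (of_nat 2 * (W' t * W t ^ (2 - Suc 0)))) / 2) (at t within S)"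
    by (intro DERIV_add DERIV_cmult DERIV_divide dG dW dW' nz DERIV_cdivide[OF dl])
  moreover have "gg + lam * ((W'' * W t - W' t * W' t) / (W t * W t)) + (1 / (W t)\<^sup>2 * (of_nat 2 * (W' t * W t ^ (2 - Suc 0)))) / 2
      = - lam * (W' t / W t)\<^sup>2"
  proof -
    have "lam * ((W'' * W t - W' t * W' t) / (W t * W t)) = ((lam * W'') * W t - lam * W' t * W' t) / (W t * W t)"
      by (simp add: algebra_simps add_divide_distrib diff_divide_distrib)
    also have "\<dots> = ((- W' t - gg * W t) * W t - lam * W' t * W' t) / (W t * W t)" by (simp add: ode)
    finally have 1: "lam * ((W'' * W t - W' t * W' t) / (W t * W t)) = ((- W' t - gg * W t) * W t - lam * W' t * W' t) / (W t * W t)" .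
    show ?thesis unfolding 1 using nz by (simp add: field_simps power2_eq_square)
  qed
  ultimately show ?thesis by simp
qed

lemma R_deriv:
  fixes G W W' :: "real \<Rightarrow> real"
  assumes dG: "(G has_real_derivative gg) (at t within S)"
    and dW: "(W has_real_derivative W' t) (at t within S)"
    and dW': "(W' has_real_derivative W'') (at t within S)"
    and nz: "W t \<noteq> 0"
    and ode: "lam * W'' = - W' t + gg * W t"
  shows "((\<lambda>s. G s - lam * (W' s / W s) - ln ((W s)\<^sup>2) / 2) has_real_derivative (lam * (W' t / W t)\<^sup>2)) (at t within S)"
proof -
  have dG': "((\<lambda>s. - G s) has_real_derivative - gg) (at t within S)" using DERIV_minus[OF dG] .
  have "((\<lambda>s. - G s + lam * (W' s / W s) + ln ((W s)\<^sup>2) / 2) has_real_derivative (- lam * (W' t / W t)\<^sup>2)) (at t within S)"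
    by (rule Q_deriv[OF dG' dW dW' nz]) (simp add: ode)
  from DERIV_minus[OF this] show ?thesis by (simp add: algebra_simps)
qed

context mgf begin

definition Gk :: "'d \<Rightarrow> real \<Rightarrow> real" where "Gk k t = integral {0..t} (\<lambda>s. g s $ k)"

lemma cont_gk: "continuous_on {0..} (\<lambda>s. g s $ k)"
  using cont_g by (rule continuous_on_component)

lemma dGk: "t \<ge> 0 \<Longrightarrow> (Gk k has_real_derivative g t $ k) (at t within {0..})"
proof -
  assume t: "t \<ge> 0"
  have "continuous_on {0..t+1} (\<lambda>s. g s $ k)" using cont_gk by (rule continuous_on_subset) auto
  then have "((\<lambda>u. integral {0..u} (\<lambda>s. g s $ k)) has_vector_derivative g t $ k) (at t within {0..t+1})"
    using t by (intro integral_has_vector_derivative) auto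
  then show ?thesis unfolding Gk_def has_real_derivative_iff_has_vector_derivative
    using at_Icc_eq_atLeast[of 0 t "t+1"] t by simp
qed

lemma ev_T: obtains T where "T \<ge> 0" "\<And>t k. t \<ge> T \<Longrightarrow> \<bar>(u t $ k)\<^sup>2 - (v t $ k)\<^sup>2\<bar> > Dinf $ k / 2"
proof -
  have "eventually (\<lambda>t. \<forall>k. \<bar>(u t $ k)\<^sup>2 - (v t $ k)\<^sup>2\<bar> > Dinf $ k / 2) at_top"
    by (rule eventually_all_finite) (rule Delta_ev)
  then obtain T where T: "\<And>t. t \<ge> T \<Longrightarrow> \<forall>k. \<bar>(u t $ k)\<^sup>2 - (v t $ k)\<^sup>2\<bar> > Dinf $ k / 2"
    unfolding eventually_at_top_linorder by blast
  show ?thesis by (rule that[of "max T 0"]) (use T in auto)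
qed

lemma bnd_wz: obtains B where "B > 0" "\<And>t k. t \<ge> 0 \<Longrightarrow> \<bar>u t $ k + v t $ k\<bar> \<le> B \<and> \<bar>u t $ k - v t $ k\<bar> \<le> B"
proof -
  obtain Bu where Bu: "Bu > 0" "\<And>t i. t \<ge> 0 \<Longrightarrow> \<bar>u t $ i\<bar> \<le> Bu" using bnd_u by blast
  obtain Bv where Bv: "Bv > 0" "\<And>t i. t \<ge> 0 \<Longrightarrow> \<bar>v t $ i\<bar> \<le> Bv" using bnd_v by blast
  have m: "\<bar>u t $ k + v t $ k\<bar> \<le> Bu + Bv \<and> \<bar>u t $ k - v t $ k\<bar> \<le> Bu + Bv" if "t \<ge> 0" for t k
    using Bu(2)[OF that, of k] Bv(2)[OF that, of k] by arith
  show ?thesis by (rule that[OF _ m]) (use Bu Bv in auto)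
qed

end


lemma tendsto_bounded_zero:
  fixes f h :: "real \<Rightarrow> real"
  assumes "(h \<longlongrightarrow> 0) at_top" "eventually (\<lambda>t. \<bar>f t\<bar> \<le> \<bar>h t\<bar> / c) at_top" "c > 0"
  shows "(f \<longlongrightarrow> 0) at_top"
proof -
  have l: "((\<lambda>t. \<bar>h t\<bar> / c) \<longlongrightarrow> \<bar>0\<bar> / c) at_top" by (intro tendsto_intros assms(1)) (use assms(3) in auto)
  then have l': "((\<lambda>t. \<bar>h t\<bar> / c) \<longlongrightarrow> 0) at_top" by simp
  have "((\<lambda>t. \<bar>f t\<bar>) \<longlongrightarrow> 0) at_top"
    by (rule tendsto_sandwich[OF _ assms(2) tendsto_const l']) auto
  then show ?thesis by (simp add: tendsto_rabs_zero_iff)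
qed

context mgf begin

lemma wz_lower:
  obtains T c where "T \<ge> 0" "c > 0" "\<And>t. t \<ge> T \<Longrightarrow> \<bar>u t $ k + v t $ k\<bar> \<ge> c \<and> \<bar>u t $ k - v t $ k\<bar> \<ge> c"
    "\<And>t. t \<ge> T \<Longrightarrow> ((u t $ k)\<^sup>2 - (v t $ k)\<^sup>2)\<^sup>2 \<ge> (Dinf $ k / 2)\<^sup>2"
proof -
  obtain T where T: "T \<ge> 0" "\<And>t k. t \<ge> T \<Longrightarrow> \<bar>(u t $ k)\<^sup>2 - (v t $ k)\<^sup>2\<bar> > Dinf $ k / 2" using ev_T by blast
  obtain B where B: "B > 0" "\<And>t k. t \<ge> 0 \<Longrightarrow> \<bar>u t $ k + v t $ k\<bar> \<le> B \<and> \<bar>u t $ k - v t $ k\<bar> \<le> B" using bnd_wz by blast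
  define d where "d = Dinf $ k"
  have d: "d > 0" using Dinf_pos d_def by simp
  define c where "c = d / (2 * B)"
  have c: "c > 0" using d B by (simp add: c_def)
  have m: "\<bar>u t $ k + v t $ k\<bar> \<ge> c \<and> \<bar>u t $ k - v t $ k\<bar> \<ge> c" if t: "t \<ge> T" for t
  proof -
    define w where "w = u t $ k + v t $ k"
    define z where "z = u t $ k - v t $ k"
    have P: "(u t $ k)\<^sup>2 - (v t $ k)\<^sup>2 = w * z" unfolding w_def z_def by (simp add: algebra_simps power2_eq_square)
    have 1: "\<bar>w\<bar> * \<bar>z\<bar> > d / 2" using T(2)[OF t, of k] unfolding P d_def abs_mult .
    have 2: "\<bar>w\<bar> \<le> B" "\<bar>z\<bar> \<le> B" using B(2)[of t k] t T(1) unfolding w_def z_def by auto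
    have "\<bar>w\<bar> * B \<ge> \<bar>w\<bar> * \<bar>z\<bar>" using 2 by (intro mult_left_mono) auto
    moreover have "\<bar>z\<bar> * B \<ge> \<bar>z\<bar> * \<bar>w\<bar>" using 2 by (intro mult_left_mono) auto
    ultimately have "\<bar>w\<bar> * B \<ge> \<bar>w\<bar> * \<bar>z\<bar>" "\<bar>z\<bar> * B \<ge> \<bar>w\<bar> * \<bar>z\<bar>" by (simp_all add: mult.commute)
    then have "\<bar>w\<bar> * B > d / 2" "\<bar>z\<bar> * B > d / 2" using 1 by linarith+
    then have "\<bar>w\<bar> > c" "\<bar>z\<bar> > c" unfolding c_def using B(1) by (simp_all add: field_simps)
    then show ?thesis unfolding w_def z_def by simp
  qed
  have m2: "((u t $ k)\<^sup>2 - (v t $ k)\<^sup>2)\<^sup>2 \<ge> (Dinf $ k / 2)\<^sup>2" if t: "t \<ge> T" for t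
  proof -
    have "\<bar>(u t $ k)\<^sup>2 - (v t $ k)\<^sup>2\<bar> \<ge> \<bar>Dinf $ k / 2\<bar>" using T(2)[OF t, of k] d d_def by simp
    then show ?thesis using abs_le_square_iff by blast
  qed
  show ?thesis by (rule that[OF T(1) c m m2])
qed

lemma A_conv: "\<exists>K. ((\<lambda>t. Gk k t + ln ((u t $ k + v t $ k)\<^sup>2) / 2) \<longlongrightarrow> K) at_top"
proof -
  obtain T c where T: "T \<ge> 0" "c > 0" "\<And>t. t \<ge> T \<Longrightarrow> \<bar>u t $ k + v t $ k\<bar> \<ge> c \<and> \<bar>u t $ k - v t $ k\<bar> \<ge> c"
    "\<And>t. t \<ge> T \<Longrightarrow> ((u t $ k)\<^sup>2 - (v t $ k)\<^sup>2)\<^sup>2 \<ge> (Dinf $ k / 2)\<^sup>2" using wz_lower by blast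
  obtain Bd where Bd: "Bd > 0" "\<And>t k. t \<ge> 0 \<Longrightarrow> \<bar>u' t $ k\<bar> \<le> Bd \<and> \<bar>v' t $ k\<bar> \<le> Bd" using bnd_u' by blast
  define W where "W t = u t $ k + v t $ k" for t
  define W' where "W' t = u' t $ k + v' t $ k" for t
  define Z where "Z t = u t $ k - v t $ k" for t
  define Z' where "Z' t = u' t $ k - v' t $ k" for t
  define Q where "Q t = Gk k t + lam * (W' t / W t) + ln ((W t)\<^sup>2) / 2" for t
  define R where "R t = Gk k t - lam * (Z' t / Z t) - ln ((Z t)\<^sup>2) / 2" for t
  define d where "d = Dinf $ k"
  have d: "d > 0" using Dinf_pos d_def by simp
  have Wnz: "W t \<noteq> 0" "Z t \<noteq> 0" if "t \<ge> T" for t using T(2) T(3)[OF that] unfolding W_def Z_def by auto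
  have DQ: "DW Q (\<lambda>t. - lam * (W' t / W t)\<^sup>2) T"
    unfolding DW_def
  proof (intro allI impI)
    fix t assume t: "t \<ge> T"
    then have t0: "t \<ge> 0" using T(1) by linarith
    have "(Q has_real_derivative - lam * (W' t / W t)\<^sup>2) (at t within {0..})"
      unfolding Q_def
    proof (rule Q_deriv[OF dGk[OF t0]])
      show "(W has_real_derivative W' t) (at t within {0..})" unfolding W_def W'_def by (intro DERIV_add du_c dv_c t0)
      show "(W' has_real_derivative u'' t $ k + v'' t $ k) (at t within {0..})" unfolding W'_def by (intro DERIV_add ddu_c ddv_c t0)
      show "W t \<noteq> 0" using Wnz t by auto
      show "lam * (u'' t $ k + v'' t $ k) = - W' t - g t $ k * W t"
        using ode_u_c[OF t0, of k] ode_v_c[OF t0, of k] unfolding W_def W'_def by (simp add: algebra_simps)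
    qed
    then show "(Q has_real_derivative - lam * (W' t / W t)\<^sup>2) (at t within {T..})"
      by (rule has_field_derivative_subset) (use T(1) in auto)
  qed
  have DR: "DW R (\<lambda>t. lam * (Z' t / Z t)\<^sup>2) T"
    unfolding DW_def
  proof (intro allI impI)
    fix t assume t: "t \<ge> T"
    then have t0: "t \<ge> 0" using T(1) by linarith
    have "(R has_real_derivative lam * (Z' t / Z t)\<^sup>2) (at t within {0..})"
      unfolding R_def
    proof (rule R_deriv[OF dGk[OF t0]])
      show "(Z has_real_derivative Z' t) (at t within {0..})" unfolding Z_def Z'_def by (intro DERIV_diff du_c dv_c t0)
      show "(Z' has_real_derivative u'' t $ k - v'' t $ k) (at t within {0..})" unfolding Z'_def by (intro DERIV_diff ddu_c ddv_c t0)
      show "Z t \<noteq> 0" using Wnz t by auto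
      show "lam * (u'' t $ k - v'' t $ k) = - Z' t + g t $ k * Z t"
        using ode_u_c[OF t0, of k] ode_v_c[OF t0, of k] unfolding Z_def Z'_def by (simp add: algebra_simps)
    qed
    then show "(R has_real_derivative lam * (Z' t / Z t)\<^sup>2) (at t within {T..})"
      by (rule has_field_derivative_subset) (use T(1) in auto)
  qed
  have Qdec: "Q t \<le> Q s" if "T \<le> s" "s \<le> t" for s t
    by (rule DW_nonpos_dec[OF DQ _ that]) (use lam_pos in auto)
  have Rinc: "R s \<le> R t" if "T \<le> s" "s \<le> t" for s t
    by (rule DW_nonneg_inc[OF DR _ that]) (use lam_pos in auto)
  have ratio: "\<bar>W' t / W t\<bar> \<le> 2 * Bd / c \<and> \<bar>Z' t / Z t\<bar> \<le> 2 * Bd / c" if t: "t \<ge> T" for t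
  proof -
    have t0: "t \<ge> 0" using t T(1) by linarith
    have "\<bar>W' t\<bar> \<le> 2 * Bd" "\<bar>Z' t\<bar> \<le> 2 * Bd" using Bd(2)[OF t0, of k] unfolding W'_def Z'_def by arith+
    moreover have "\<bar>W t\<bar> \<ge> c" "\<bar>Z t\<bar> \<ge> c" using T(3)[OF t] unfolding W_def Z_def by auto
    ultimately show ?thesis using T(2) by (auto simp: abs_divide intro!: frac_le)
  qed
  define C0 where "C0 = lam * (4 * Bd / c) - ln ((d / 2)\<^sup>2) / 2"
  have QR: "Q t - R t \<ge> - C0" if t: "t \<ge> T" for t
  proof -
    have e1: "Q t - R t = lam * (W' t / W t + Z' t / Z t) + (ln ((W t)\<^sup>2) + ln ((Z t)\<^sup>2)) / 2"
      unfolding Q_def R_def by (simp add: algebra_simps)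
    have e2: "ln ((W t)\<^sup>2) + ln ((Z t)\<^sup>2) = ln (((u t $ k)\<^sup>2 - (v t $ k)\<^sup>2)\<^sup>2)"
    proof -
      have "((u t $ k)\<^sup>2 - (v t $ k)\<^sup>2)\<^sup>2 = (W t)\<^sup>2 * (Z t)\<^sup>2" unfolding W_def Z_def by (simp add: algebra_simps power2_eq_square)
      then show ?thesis using Wnz[OF t] by (simp add: ln_mult)
    qed
    have e3: "ln (((u t $ k)\<^sup>2 - (v t $ k)\<^sup>2)\<^sup>2) \<ge> ln ((d / 2)\<^sup>2)"
      using T(4)[OF t] d unfolding d_def by (subst ln_le_cancel_iff) auto
    have e4: "lam * (W' t / W t + Z' t / Z t) \<ge> - (lam * (4 * Bd / c))"
    proof -
      have "\<bar>W' t / W t + Z' t / Z t\<bar> \<le> 4 * Bd / c" using ratio[OF t] by arith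
      then have "\<bar>lam * (W' t / W t + Z' t / Z t)\<bar> \<le> lam * (4 * Bd / c)"
        using lam_pos unfolding abs_mult abs_of_pos[OF lam_pos] by (intro mult_left_mono) auto
      then show ?thesis unfolding abs_le_iff by linarith
    qed
    have e5: "(ln ((W t)\<^sup>2) + ln ((Z t)\<^sup>2)) / 2 \<ge> ln ((d / 2)\<^sup>2) / 2" using e2 e3 by simp
    show ?thesis unfolding C0_def e1 using e4 e5 by linarith
  qed
  have "\<exists>K. (Q \<longlongrightarrow> K) at_top"
  proof (rule dec_conv[where T=T and B="R T - C0"])
    show "Q t \<le> Q s" if "T \<le> s" "s \<le> t" for s t using Qdec that .
    show "R T - C0 \<le> Q t" if "T \<le> t" for t using Rinc[of T t] QR[of t] that by auto
  qed
  then obtain K where K: "(Q \<longlongrightarrow> K) at_top" by blast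
  have W'lim: "(W' \<longlongrightarrow> 0) at_top" unfolding W'_def using tendsto_add[OF u'_lim v'_lim] by simp
  have rlim: "((\<lambda>t. W' t / W t) \<longlongrightarrow> 0) at_top"
  proof (rule tendsto_bounded_zero[OF W'lim _ T(2)])
    show "eventually (\<lambda>t. \<bar>W' t / W t\<bar> \<le> \<bar>W' t\<bar> / c) at_top"
      unfolding eventually_at_top_linorder
    proof (intro exI[of _ T] allI impI)
      fix t assume t: "t \<ge> T"
      have "\<bar>W t\<bar> \<ge> c" using T(3)[OF t] unfolding W_def by auto
      then show "\<bar>W' t / W t\<bar> \<le> \<bar>W' t\<bar> / c" using T(2) by (auto simp: abs_divide intro!: divide_left_mono)
    qed
  qed
  have "((\<lambda>t. Q t - lam * (W' t / W t)) \<longlongrightarrow> K - lam * 0) at_top"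
    by (intro tendsto_intros K rlim)
  moreover have "(\<lambda>t. Q t - lam * (W' t / W t)) = (\<lambda>t. Gk k t + ln ((u t $ k + v t $ k)\<^sup>2) / 2)"
    unfolding Q_def W_def by auto
  ultimately show ?thesis by auto
qed

end


lemma gradL_diff:
  "gradL x y a - gradL x y b = (1 / real CARD('n)) *\<^sub>R (\<Sum>j\<in>UNIV. (x j \<bullet> (a - b)) *\<^sub>R x j)"
  for x :: "'n::finite \<Rightarrow> real^'d::finite"
proof -
  have "gradL x y a - gradL x y b = (1 / real CARD('n)) *\<^sub>R ((\<Sum>j\<in>UNIV. (y j - x j \<bullet> b) *\<^sub>R x j) - (\<Sum>j\<in>UNIV. (y j - x j \<bullet> a) *\<^sub>R x j))"
    unfolding gradL_def by (simp add: scaleR_diff_right)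
  also have "(\<Sum>j\<in>UNIV. (y j - x j \<bullet> b) *\<^sub>R x j) - (\<Sum>j\<in>UNIV. (y j - x j \<bullet> a) *\<^sub>R x j) = (\<Sum>j\<in>UNIV. (x j \<bullet> (a - b)) *\<^sub>R x j)"
    unfolding sum_subtractf[symmetric] by (rule sum.cong) (auto simp: inner_diff_right scaleR_diff_left[symmetric])
  finally show ?thesis .
qed

lemma gradL_eq_orth:
  fixes x :: "'n::finite \<Rightarrow> real^'d::finite"
  assumes "gradL x y a = gradL x y b"
  shows "x j \<bullet> (a - b) = 0"
proof -
  define e where "e = a - b"
  have "(1 / real CARD('n)) *\<^sub>R (\<Sum>j\<in>UNIV. (x j \<bullet> e) *\<^sub>R x j) = 0"
    using gradL_diff[of x y a b] assms unfolding e_def by simp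
  then have "(\<Sum>j\<in>UNIV. (x j \<bullet> e) *\<^sub>R x j) = 0" by simp
  then have "(\<Sum>j\<in>UNIV. (x j \<bullet> e) *\<^sub>R x j) \<bullet> e = 0" by simp
  then have "(\<Sum>j\<in>UNIV. (x j \<bullet> e)\<^sup>2) = 0" by (simp add: inner_sum_left power2_eq_square)
  then have "\<forall>j\<in>UNIV. (x j \<bullet> e)\<^sup>2 = 0" by (subst sum_nonneg_eq_0_iff[symmetric]) auto
  then show ?thesis unfolding e_def by simp
qed

lemma gradL_inner_orth:
  fixes x :: "'n::finite \<Rightarrow> real^'d::finite"
  assumes "\<And>j. x j \<bullet> e = 0"
  shows "gradL x y \<theta> \<bullet> e = 0"
  unfolding gradL_def using assms by (simp add: inner_sum_left)

definition Th :: "real^'d::finite \<Rightarrow> real^'d \<Rightarrow> real^'d" where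
  "Th D a = (\<chi> k. (exp (2 * a $ k) - (D $ k)\<^sup>2 * exp (- 2 * a $ k)) / 4)"

lemma Th_strict: "(a::real) < b \<Longrightarrow> (exp (2 * a) - c\<^sup>2 * exp (- 2 * a)) / 4 < (exp (2 * b) - c\<^sup>2 * exp (- 2 * b)) / 4"
proof -
  assume ab: "a < b"
  have "exp (2 * a) < exp (2 * b)" using ab by simp
  moreover have "c\<^sup>2 * exp (- 2 * b) \<le> c\<^sup>2 * exp (- 2 * a)" using ab by (intro mult_left_mono) auto
  ultimately have "exp (2 * a) - c\<^sup>2 * exp (- 2 * a) < exp (2 * b) - c\<^sup>2 * exp (- 2 * b)" by linarith
  then show ?thesis by simp
qed

lemma Th_inj:
  assumes "(b - a) \<bullet> (Th D a - Th D b) = 0"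
  shows "a = b"
proof -
  define f where "f k = (b $ k - a $ k) * ((Th D a - Th D b) $ k)" for k
  have nn: "- f k \<ge> 0" for k
  proof (cases "a $ k" "b $ k" rule: linorder_cases)
    case less then show ?thesis unfolding f_def Th_def using Th_strict[OF less, of "D $ k"]
      by (simp add: mult_nonneg_nonpos)
  next
    case equal then show ?thesis unfolding f_def by simp
  next
    case greater then show ?thesis unfolding f_def Th_def using Th_strict[OF greater, of "D $ k"]
      by (simp add: mult_nonpos_nonneg)
  qed
  have "(\<Sum>k\<in>UNIV. f k) = 0"
    using assms unfolding f_def inner_vec_def by simp
  then have "(\<Sum>k\<in>UNIV. - f k) = 0" by (simp add: sum_negf)
  then have z: "- f k = 0" for k using sum_nonneg_eq_0_iff[of UNIV "\<lambda>k. - f k"] nn by auto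
  have "a $ k = b $ k" for k
  proof (rule ccontr)
    assume ne: "a $ k \<noteq> b $ k"
    then show False
    proof (cases "a $ k < b $ k")
      case True
      then have "- f k > 0" unfolding f_def Th_def using Th_strict[OF True, of "D $ k"] by (simp add: mult_pos_neg)
      then show False using z by simp
    next
      case False
      then have lt: "b $ k < a $ k" using ne by simp
      then have "- f k > 0" unfolding f_def Th_def using Th_strict[OF lt, of "D $ k"] by (simp add: mult_neg_pos)
      then show False using z by simp
    qed
  qed
  then show ?thesis by (simp add: vec_eq_iff)
qed

context mgf begin

definition Gv :: "real \<Rightarrow> real^'d" where "Gv t = integral {0..t} g"
definition av :: "real \<Rightarrow> real^'d" where "av t = (\<chi> k. ln ((u t $ k + v t $ k)\<^sup>2) / 2)"
definition Kv :: "real^'d" where "Kv = (\<chi> k. SOME K. ((\<lambda>t. Gk k t + ln ((u t $ k + v t $ k)\<^sup>2) / 2) \<longlongrightarrow> K) at_top)"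

lemma g_integrable: "t \<ge> 0 \<Longrightarrow> g integrable_on {0..t}"
  by (intro integrable_continuous_interval continuous_on_subset[OF cont_g]) auto

lemma Gv_comp: "t \<ge> 0 \<Longrightarrow> Gv t $ k = Gk k t"
  unfolding Gv_def Gk_def using integral_component_eq_cart[OF g_integrable] by simp

lemma GA_lim: "((\<lambda>t. Gv t + av t) \<longlongrightarrow> Kv) at_top"
proof (rule vec_tendstoI)
  fix k
  have "((\<lambda>t. Gk k t + ln ((u t $ k + v t $ k)\<^sup>2) / 2) \<longlongrightarrow> Kv $ k) at_top"
    unfolding Kv_def using someI_ex[OF A_conv[of k]] by simp
  moreover have "eventually (\<lambda>t. Gk k t + ln ((u t $ k + v t $ k)\<^sup>2) / 2 = (Gv t + av t) $ k) at_top"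
    unfolding eventually_at_top_linorder by (intro exI[of _ 0]) (auto simp: Gv_comp av_def)
  ultimately show "((\<lambda>t. (Gv t + av t) $ k) \<longlongrightarrow> Kv $ k) at_top" by (rule tendsto_cong[THEN iffD1, rotated])
qed

lemma Gv_orth: "(\<And>j. x j \<bullet> e = 0) \<Longrightarrow> t \<ge> 0 \<Longrightarrow> Gv t \<bullet> e = 0"
proof -
  assume o: "\<And>j. x j \<bullet> e = 0" and t: "t \<ge> 0"
  have "Gv t \<bullet> e = integral {0..t} ((\<lambda>z. z \<bullet> e) \<circ> g)"
    unfolding Gv_def by (rule integral_linear[OF g_integrable[OF t] bounded_linear_inner_left, symmetric])
  also have "((\<lambda>z. z \<bullet> e) \<circ> g) = (\<lambda>s. 0)" unfolding g_def o_def using gradL_inner_orth[where x=x and e=e] o by auto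
  finally show ?thesis by simp
qed

lemma theta_formula:
  assumes "u t $ k + v t $ k \<noteq> 0"
  shows "u t $ k * v t $ k = (exp (2 * av t $ k) - (\<bar>(u t $ k)\<^sup>2 - (v t $ k)\<^sup>2\<bar>)\<^sup>2 * exp (- 2 * av t $ k)) / 4"
proof -
  define w where "w = u t $ k + v t $ k"
  define z where "z = u t $ k - v t $ k"
  have w2: "w\<^sup>2 > 0" using assms w_def by simp
  have a: "av t $ k = ln (w\<^sup>2) / 2" unfolding av_def w_def by simp
  have e1: "exp (2 * av t $ k) = w\<^sup>2" unfolding a using w2 by simp
  have e2: "exp (- 2 * av t $ k) = 1 / w\<^sup>2" unfolding a using w2 by (simp add: exp_minus exp_ln inverse_eq_divide)
  have P: "(\<bar>(u t $ k)\<^sup>2 - (v t $ k)\<^sup>2\<bar>)\<^sup>2 = w\<^sup>2 * z\<^sup>2" unfolding w_def z_def by (simp add: algebra_simps power2_eq_square)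
  show ?thesis unfolding e1 e2 P using w2 unfolding w_def z_def by (simp add: field_simps power2_eq_square)
qed

end


context mgf begin

lemma av_bnd_k: "\<exists>M. eventually (\<lambda>t. u t $ k + v t $ k \<noteq> 0 \<and> \<bar>av t $ k\<bar> \<le> M) at_top"
proof -
  obtain T c where T: "T \<ge> 0" "c > 0" "\<And>t. t \<ge> T \<Longrightarrow> \<bar>u t $ k + v t $ k\<bar> \<ge> c \<and> \<bar>u t $ k - v t $ k\<bar> \<ge> c"
    "\<And>t. t \<ge> T \<Longrightarrow> ((u t $ k)\<^sup>2 - (v t $ k)\<^sup>2)\<^sup>2 \<ge> (Dinf $ k / 2)\<^sup>2"
    by (rule wz_lower[of k], rule that)
  obtain B where B: "B > 0" "\<And>t k. t \<ge> 0 \<Longrightarrow> \<bar>u t $ k + v t $ k\<bar> \<le> B \<and> \<bar>u t $ k - v t $ k\<bar> \<le> B" using bnd_wz by blast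
  have m: "u t $ k + v t $ k \<noteq> 0 \<and> \<bar>av t $ k\<bar> \<le> (\<bar>ln (c\<^sup>2)\<bar> + \<bar>ln (B\<^sup>2)\<bar>) / 2" if t: "t \<ge> T" for t
  proof -
    define w where "w = u t $ k + v t $ k"
    have 1: "c \<le> \<bar>w\<bar>" "\<bar>w\<bar> \<le> B" using T(3)[OF t] B(2)[of t k] t T(1) unfolding w_def by auto
    have "c\<^sup>2 \<le> \<bar>w\<bar>\<^sup>2" using power_mono[OF 1(1), of 2] T(2) by simp
    then have cw: "c\<^sup>2 \<le> w\<^sup>2" by simp
    have "\<bar>w\<bar>\<^sup>2 \<le> B\<^sup>2" using power_mono[OF 1(2), of 2] by simp
    then have wB: "w\<^sup>2 \<le> B\<^sup>2" by simp
    have pc: "c\<^sup>2 > 0" using T(2) by simp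
    have l1: "ln (c\<^sup>2) \<le> ln (w\<^sup>2)" "ln (w\<^sup>2) \<le> ln (B\<^sup>2)"
      by (rule ln_mono[OF cw pc], rule ln_mono[OF wB]) (use cw pc in linarith)
    have "\<bar>ln (w\<^sup>2)\<bar> \<le> \<bar>ln (c\<^sup>2)\<bar> + \<bar>ln (B\<^sup>2)\<bar>"
      using l1 abs_ge_self[of "ln (B\<^sup>2)"] abs_ge_minus_self[of "ln (c\<^sup>2)"] abs_ge_zero[of "ln (B\<^sup>2)"] abs_ge_zero[of "ln (c\<^sup>2)"]
      unfolding abs_le_iff by linarith
    moreover have "av t $ k = ln (w\<^sup>2) / 2" unfolding av_def w_def by simp
    moreover have "w \<noteq> 0" using 1 T(2) by auto
    ultimately show ?thesis unfolding w_def by simp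
  qed
  show ?thesis unfolding eventually_at_top_linorder
    by (rule exI, rule exI[of _ T], intro allI impI, rule m)
qed

lemma av_bnd: obtains T0 M where "T0 \<ge> 0" "\<And>t k. t \<ge> T0 \<Longrightarrow> u t $ k + v t $ k \<noteq> 0" "\<And>t. t \<ge> T0 \<Longrightarrow> norm (av t) \<le> M"
proof -
  have "\<forall>k. \<exists>M. eventually (\<lambda>t. u t $ k + v t $ k \<noteq> 0 \<and> \<bar>av t $ k\<bar> \<le> M) at_top" using av_bnd_k by blast
  then obtain Mf where Mf0: "\<forall>k. eventually (\<lambda>t. u t $ k + v t $ k \<noteq> 0 \<and> \<bar>av t $ k\<bar> \<le> Mf k) at_top"
    by (rule choice[THEN exE])
  then have Mf: "\<And>k. eventually (\<lambda>t. u t $ k + v t $ k \<noteq> 0 \<and> \<bar>av t $ k\<bar> \<le> Mf k) at_top" by (rule spec)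
  have "eventually (\<lambda>t. \<forall>k. u t $ k + v t $ k \<noteq> 0 \<and> \<bar>av t $ k\<bar> \<le> Mf k) at_top"
    by (rule eventually_all_finite) (rule Mf)
  then obtain T where T0: "\<forall>t\<ge>T. \<forall>k. u t $ k + v t $ k \<noteq> 0 \<and> \<bar>av t $ k\<bar> \<le> Mf k"
    unfolding eventually_at_top_linorder by blast
  have T: "\<And>t. t \<ge> T \<Longrightarrow> \<forall>k. u t $ k + v t $ k \<noteq> 0 \<and> \<bar>av t $ k\<bar> \<le> Mf k" using T0 by blast
  have m: "norm (av t) \<le> (\<Sum>k\<in>UNIV. Mf k)" if "t \<ge> max T 0" for t
  proof -
    have "norm (av t) \<le> (\<Sum>k\<in>UNIV. \<bar>av t $ k\<bar>)" by (rule norm_le_l1_cart)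
    also have "\<dots> \<le> (\<Sum>k\<in>UNIV. Mf k)" using T that by (intro sum_mono) auto
    finally show ?thesis .
  qed
  show ?thesis
  proof (rule that[of "max T 0" "\<Sum>k\<in>UNIV. Mf k"])
    show "0 \<le> max T 0" by simp
    show "u t $ k + v t $ k \<noteq> 0" if "max T 0 \<le> t" for t k using T[of t] that by simp
    show "norm (av t) \<le> (\<Sum>k\<in>UNIV. Mf k)" if "max T 0 \<le> t" for t using m that by simp
  qed
qed

lemma isCont_gradL: "isCont (gradL x y) z"
proof -
  have "continuous_on UNIV (gradL x y)" unfolding gradL_def by (intro continuous_intros)
  then show ?thesis by (simp add: continuous_on_eq_continuous_at)
qed

lemma seq_lims:
  assumes s: "filterlim s at_top sequentially" and a: "(\<lambda>n. av (s n)) \<longlonglongrightarrow> \<alpha>"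
  shows "gradL x y (Th Dinf \<alpha>) = 0" "(\<lambda>n. Gv (s n)) \<longlonglongrightarrow> Kv - \<alpha>"
proof -
  obtain T0 M where T0: "T0 \<ge> 0" "\<And>t k. t \<ge> T0 \<Longrightarrow> u t $ k + v t $ k \<noteq> 0" "\<And>t. t \<ge> T0 \<Longrightarrow> norm (av t) \<le> M"
    using av_bnd by blast
  have evT: "eventually (\<lambda>n. s n \<ge> T0) sequentially" using s by (simp add: filterlim_at_top)
  have th: "(\<lambda>n. u (s n) * v (s n)) \<longlonglongrightarrow> Th Dinf \<alpha>"
  proof (rule vec_tendstoI)
    fix k
    have l1: "(\<lambda>n. av (s n) $ k) \<longlonglongrightarrow> \<alpha> $ k" using a by (rule tendsto_vec_nth)
    have l2: "(\<lambda>n. \<bar>(u (s n) $ k)\<^sup>2 - (v (s n) $ k)\<^sup>2\<bar>) \<longlonglongrightarrow> Dinf $ k"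
      using filterlim_compose[OF Delta_c s] .
    have "(\<lambda>n. (exp (2 * av (s n) $ k) - (\<bar>(u (s n) $ k)\<^sup>2 - (v (s n) $ k)\<^sup>2\<bar>)\<^sup>2 * exp (- 2 * av (s n) $ k)) / 4)
        \<longlonglongrightarrow> (exp (2 * \<alpha> $ k) - (Dinf $ k)\<^sup>2 * exp (- 2 * \<alpha> $ k)) / 4"
    proof -
      have e1: "(\<lambda>n. exp (2 * av (s n) $ k)) \<longlonglongrightarrow> exp (2 * \<alpha> $ k)"
        by (rule tendsto_exp[OF tendsto_mult[OF tendsto_const l1]])
      have e2: "(\<lambda>n. exp (- 2 * av (s n) $ k)) \<longlonglongrightarrow> exp (- 2 * \<alpha> $ k)"
        by (rule tendsto_exp[OF tendsto_mult[OF tendsto_const l1]])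
      have p: "(\<lambda>n. (\<bar>(u (s n) $ k)\<^sup>2 - (v (s n) $ k)\<^sup>2\<bar>)\<^sup>2) \<longlonglongrightarrow> (Dinf $ k)\<^sup>2"
        by (rule tendsto_power[OF l2])
      show ?thesis by (rule tendsto_divide[OF tendsto_diff[OF e1 tendsto_mult[OF p e2]] tendsto_const]) simp
    qed
    moreover have "eventually (\<lambda>n. (exp (2 * av (s n) $ k) - (\<bar>(u (s n) $ k)\<^sup>2 - (v (s n) $ k)\<^sup>2\<bar>)\<^sup>2 * exp (- 2 * av (s n) $ k)) / 4
        = (u (s n) * v (s n)) $ k) sequentially"
      using evT
    proof eventually_elim
      case (elim n)
      have "u (s n) $ k + v (s n) $ k \<noteq> 0" using T0(2) elim by auto
      from theta_formula[OF this] show ?case by simp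
    qed
    ultimately show "(\<lambda>n. (u (s n) * v (s n)) $ k) \<longlonglongrightarrow> Th Dinf \<alpha> $ k"
      unfolding Th_def by (simp add: tendsto_cong)
  qed
  have "(\<lambda>n. g (s n)) \<longlonglongrightarrow> gradL x y (Th Dinf \<alpha>)"
    unfolding g_def by (rule isCont_tendsto_compose[OF isCont_gradL th])
  moreover have "(\<lambda>n. g (s n)) \<longlonglongrightarrow> 0" using filterlim_compose[OF g_lim s] .
  ultimately show "gradL x y (Th Dinf \<alpha>) = 0" by (rule LIMSEQ_unique)
  have "(\<lambda>n. (Gv (s n) + av (s n)) - av (s n)) \<longlonglongrightarrow> Kv - \<alpha>"
    by (intro tendsto_diff filterlim_compose[OF GA_lim s] a)
  then show "(\<lambda>n. Gv (s n)) \<longlonglongrightarrow> Kv - \<alpha>" by simp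
qed

lemma seq_uniq:
  assumes s1: "filterlim s1 at_top sequentially" and a1: "(\<lambda>n. av (s1 n)) \<longlonglongrightarrow> \<alpha>"
    and s2: "filterlim s2 at_top sequentially" and a2: "(\<lambda>n. av (s2 n)) \<longlonglongrightarrow> \<beta>"
  shows "\<alpha> = \<beta>"
proof -
  define e where "e = Th Dinf \<alpha> - Th Dinf \<beta>"
  have o: "x j \<bullet> e = 0" for j unfolding e_def
    by (rule gradL_eq_orth[where y=y]) (simp add: seq_lims(1)[OF s1 a1] seq_lims(1)[OF s2 a2])
  have l: "(\<lambda>n. (Gv (s1 n) - Gv (s2 n)) \<bullet> e) \<longlonglongrightarrow> ((Kv - \<alpha>) - (Kv - \<beta>)) \<bullet> e"
    by (intro tendsto_intros seq_lims(2)[OF s1 a1] seq_lims(2)[OF s2 a2])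
  have ev: "eventually (\<lambda>n. s1 n \<ge> 0 \<and> s2 n \<ge> 0) sequentially"
    using s1 s2 by (simp add: filterlim_at_top eventually_conj)
  have "eventually (\<lambda>n. (Gv (s1 n) - Gv (s2 n)) \<bullet> e = 0) sequentially"
    using ev
  proof eventually_elim
    case (elim n)
    have "Gv (s1 n) \<bullet> e = 0" "Gv (s2 n) \<bullet> e = 0" using Gv_orth[of e] o elim by auto
    then show ?case by (simp add: inner_diff_left)
  qed
  then have "(\<lambda>n. (Gv (s1 n) - Gv (s2 n)) \<bullet> e) \<longlonglongrightarrow> 0"
    by (simp add: tendsto_cong)
  with l have "((Kv - \<alpha>) - (Kv - \<beta>)) \<bullet> e = 0" by (rule LIMSEQ_unique)
  then have "(\<beta> - \<alpha>) \<bullet> (Th Dinf \<alpha> - Th Dinf \<beta>) = 0" unfolding e_def by (simp add: algebra_simps)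
  then show ?thesis by (rule Th_inj)
qed

end


context mgf begin

lemma av_conv: "\<exists>\<alpha>. (av \<longlongrightarrow> \<alpha>) at_top"
proof -
  obtain T0 M where T0: "T0 \<ge> 0" "\<And>t k. t \<ge> T0 \<Longrightarrow> u t $ k + v t $ k \<noteq> 0" "\<And>t. t \<ge> T0 \<Longrightarrow> norm (av t) \<le> M"
    using av_bnd by blast
  define X where "X n = T0 + real n" for n
  have Xlim: "filterlim X at_top sequentially"
    by (rule filterlim_at_top_mono[OF filterlim_real_sequentially]) (use T0(1) in \<open>simp add: X_def\<close>)
  have "bounded (range (\<lambda>n. av (X n)))"
    unfolding bounded_iff using T0(3) X_def T0(1) by (intro exI[of _ M]) auto
  then obtain \<alpha> r where r: "strict_mono r" "((\<lambda>n. av (X n)) \<circ> r) \<longlonglongrightarrow> \<alpha>"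
    using bounded_imp_convergent_subsequence by blast
  have s1: "filterlim (X \<circ> r) at_top sequentially"
    unfolding o_def by (rule filterlim_compose[OF Xlim filterlim_subseq[OF r(1)]])
  have a1: "(\<lambda>n. av ((X \<circ> r) n)) \<longlonglongrightarrow> \<alpha>" using r(2) by (simp add: o_def)
  have "(av \<longlongrightarrow> \<alpha>) at_top"
  proof (rule ccontr)
    assume "\<not> (av \<longlongrightarrow> \<alpha>) at_top"
    then obtain e where e: "e > 0" "\<not> eventually (\<lambda>t. dist (av t) \<alpha> < e) at_top"
      unfolding tendsto_iff by blast
    have "\<forall>n::nat. \<exists>t. t \<ge> T0 + real n \<and> dist (av t) \<alpha> \<ge> e"
    proof
      fix n :: nat
      show "\<exists>t. t \<ge> T0 + real n \<and> dist (av t) \<alpha> \<ge> e"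
      proof (rule ccontr)
        assume nt: "\<not> (\<exists>t. t \<ge> T0 + real n \<and> dist (av t) \<alpha> \<ge> e)"
        have "dist (av t) \<alpha> < e" if "t \<ge> T0 + real n" for t
        proof (rule ccontr)
          assume "\<not> dist (av t) \<alpha> < e"
          then have "dist (av t) \<alpha> \<ge> e" by simp
          with that nt show False by blast
        qed
        then have "\<forall>t\<ge>T0 + real n. dist (av t) \<alpha> < e" by blast
        then have "eventually (\<lambda>t. dist (av t) \<alpha> < e) at_top" unfolding eventually_at_top_linorder by blast
        then show False using e(2) by blast
      qed
    qed
    then obtain s where s: "\<And>n. s n \<ge> T0 + real n \<and> dist (av (s n)) \<alpha> \<ge> e"
      by (rule choice[THEN exE]) blast
    have sT: "s n \<ge> T0" for n using s[of n] of_nat_0_le_iff[of n] by linarith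
    have "bounded (range (\<lambda>n. av (s n)))"
      unfolding bounded_iff using T0(3) sT by (intro exI[of _ M]) auto
    then obtain \<beta> r2 where r2: "strict_mono r2" "((\<lambda>n. av (s n)) \<circ> r2) \<longlonglongrightarrow> \<beta>"
      using bounded_imp_convergent_subsequence by blast
    have slim: "filterlim s at_top sequentially"
    proof (rule filterlim_at_top_mono[OF filterlim_real_sequentially])
      have "real n \<le> s n" for n using s[of n] T0(1) by linarith
      then show "eventually (\<lambda>n. real n \<le> s n) sequentially" by simp
    qed
    have s2: "filterlim (s \<circ> r2) at_top sequentially"
      unfolding o_def by (rule filterlim_compose[OF slim filterlim_subseq[OF r2(1)]])
    have a2: "(\<lambda>n. av ((s \<circ> r2) n)) \<longlonglongrightarrow> \<beta>" using r2(2) by (simp add: o_def)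
    have ab: "\<alpha> = \<beta>" by (rule seq_uniq[OF s1 a1 s2 a2])
    have "(\<lambda>n. dist (av ((s \<circ> r2) n)) \<alpha>) \<longlonglongrightarrow> dist \<beta> \<alpha>" by (intro tendsto_dist a2 tendsto_const)
    then have "e \<le> dist \<beta> \<alpha>" by (rule tendsto_lowerbound) (use s in \<open>simp_all add: o_def\<close>)
    then show False using ab e(1) by simp
  qed
  then show ?thesis by blast
qed

lemma final1: "\<exists>I. ((\<lambda>t. integral {0..t} (\<lambda>s. gradL x y (u s * v s))) \<longlongrightarrow> I) at_top"
proof -
  obtain \<alpha> where a: "(av \<longlongrightarrow> \<alpha>) at_top" using av_conv by blast
  have "((\<lambda>t. (Gv t + av t) - av t) \<longlongrightarrow> Kv - \<alpha>) at_top" by (intro tendsto_diff GA_lim a)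
  then have "(Gv \<longlongrightarrow> Kv - \<alpha>) at_top" by simp
  moreover have "Gv = (\<lambda>t. integral {0..t} (\<lambda>s. gradL x y (u s * v s)))"
    unfolding Gv_def g_def[abs_def] ..
  ultimately show ?thesis by auto
qed

lemma final2: "((\<lambda>t. integral {0..t} (\<lambda>s. exp (- (t - s) / lam) *\<^sub>R gradL x y (u s * v s))) \<longlongrightarrow> 0) at_top"
proof (rule vec_tendstoI)
  fix k
  define h where "h s = exp (s / lam) * g s $ k" for s
  define N where "N t = integral {0..t} h" for t
  have conth: "continuous_on {0..} h" unfolding h_def by (intro continuous_intros cont_gk) (use lam_pos cont_g in auto)
  have "((\<lambda>t. N t / exp (t / lam)) \<longlongrightarrow> 0) at_top"
  proof (rule lhospital_at_top_at_top[where f'="h" and g'="\<lambda>t. exp (t / lam) * (1 / lam)"])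
    have "LIM t at_top. (1 / lam) * t :> at_top"
      by (rule filterlim_tendsto_pos_mult_at_top[OF tendsto_const _ filterlim_ident]) (use lam_pos in simp)
    then have "LIM t at_top. t / lam :> at_top" by simp
    then show "LIM t at_top. exp (t / lam) :> at_top" by (rule filterlim_compose[OF exp_at_top])
    show "eventually (\<lambda>t. exp (t / lam) * (1 / lam) \<noteq> 0) at_top" using lam_pos by simp
    show "eventually (\<lambda>t. DERIV (\<lambda>t. exp (t / lam)) t :> exp (t / lam) * (1 / lam)) at_top"
    proof (rule always_eventually, rule allI)
      fix t :: real
      show "DERIV (\<lambda>t. exp (t / lam)) t :> exp (t / lam) * (1 / lam)"
        using DERIV_chain2[OF DERIV_exp DERIV_cdivide[OF DERIV_ident, where c=lam]] by simp
    qed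
    show "eventually (\<lambda>t. DERIV N t :> h t) at_top"
      using eventually_gt_at_top[of 0]
    proof eventually_elim
      case (elim t)
      have "continuous_on {0..t+1} h" using conth by (rule continuous_on_subset) auto
      then have "(N has_vector_derivative h t) (at t within {0..t+1})"
        unfolding N_def using elim by (intro integral_has_vector_derivative) auto
      moreover have "at t within {0..t+1} = at t" using elim by (intro at_within_Icc_at) auto
      ultimately show ?case by (simp add: has_real_derivative_iff_has_vector_derivative)
    qed
    have "((\<lambda>t. lam * g t $ k) \<longlongrightarrow> lam * 0) at_top" by (intro tendsto_intros g_lim_c)
    moreover have "(\<lambda>t. h t / (exp (t / lam) * (1 / lam))) = (\<lambda>t. lam * g t $ k)"
      unfolding h_def using lam_pos by (auto simp: field_simps)
    ultimately show "((\<lambda>t. h t / (exp (t / lam) * (1 / lam))) \<longlongrightarrow> 0) at_top" by simp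
  qed
  moreover have "eventually (\<lambda>t. N t / exp (t / lam) =
      integral {0..t} (\<lambda>s. exp (- (t - s) / lam) *\<^sub>R gradL x y (u s * v s)) $ k) at_top"
    using eventually_ge_at_top[of 0]
  proof eventually_elim
    case (elim t)
    have ih: "h integrable_on {0..t}" by (intro integrable_continuous_interval continuous_on_subset[OF conth]) auto
    have cv: "continuous_on {0..t} (\<lambda>s. exp (- (t - s) / lam) *\<^sub>R g s)"
      by (intro continuous_intros continuous_on_subset[OF cont_g]) (use lam_pos in auto)
    have "integral {0..t} (\<lambda>s. exp (- (t - s) / lam) *\<^sub>R gradL x y (u s * v s)) $ k
        = integral {0..t} (\<lambda>s. (exp (- (t - s) / lam) *\<^sub>R g s) $ k)"
      using integral_component_eq_cart[OF integrable_continuous_interval[OF cv], of k] unfolding g_def by simp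
    also have "\<dots> = integral {0..t} (\<lambda>s. exp (- t / lam) * h s)"
    proof (rule integral_cong)
      fix s
      have "- (t - s) / lam = - t / lam + s / lam" using lam_pos by (simp add: field_simps)
      then have "exp (- (t - s) / lam) = exp (- t / lam) * exp (s / lam)" by (simp only: exp_add)
      then show "(exp (- (t - s) / lam) *\<^sub>R g s) $ k = exp (- t / lam) * h s" unfolding h_def by simp
    qed
    also have "\<dots> = exp (- t / lam) * N t" unfolding N_def using integral_mult[OF ih] by simp
    also have "\<dots> = N t / exp (t / lam)" by (simp add: exp_minus field_simps)
    finally show ?case by simp
  qed
  ultimately show "((\<lambda>t. integral {0..t} (\<lambda>s. exp (- (t - s) / lam) *\<^sub>R gradL x y (u s * v s)) $ k) \<longlongrightarrow> 0 $ k) at_top"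
    by (simp add: tendsto_cong)
qed

end

theorem lemma3:
  fixes x :: "'n::finite \<Rightarrow> real^'d::finite" and y :: "'n \<Rightarrow> real"
    and lam :: real
    and u v u' v' u'' v'' :: "real \<Rightarrow> real^'d"
  assumes lam_pos: "lam > 0"
    and du: "\<And>t. t \<ge> 0 \<Longrightarrow> (u has_vector_derivative u' t) (at t within {0..})"
    and dv: "\<And>t. t \<ge> 0 \<Longrightarrow> (v has_vector_derivative v' t) (at t within {0..})"
    and ddu: "\<And>t. t \<ge> 0 \<Longrightarrow> (u' has_vector_derivative u'' t) (at t within {0..})"
    and ddv: "\<And>t. t \<ge> 0 \<Longrightarrow> (v' has_vector_derivative v'' t) (at t within {0..})"
    and ode_u: "\<And>t. t \<ge> 0 \<Longrightarrow> lam *\<^sub>R u'' t + u' t + gradL x y (u t * v t) * v t = 0"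
    and ode_v: "\<And>t. t \<ge> 0 \<Longrightarrow> lam *\<^sub>R v'' t + v' t + gradL x y (u t * v t) * u t = 0"
    and init_vel: "u' 0 = 0" "v' 0 = 0"
    and init_Delta: "\<And>i. \<bar>(u 0 $ i)\<^sup>2 - (v 0 $ i)\<^sup>2\<bar> \<noteq> 0"
    and bdd_u: "bounded (u ` {0..})"
    and bdd_v: "bounded (v ` {0..})"
    and Delta_lim: "((\<lambda>t. \<chi> i. \<bar>(u t $ i)\<^sup>2 - (v t $ i)\<^sup>2\<bar>) \<longlongrightarrow> Dinf) at_top"
    and Dinf_nz: "\<And>i. Dinf $ i \<noteq> 0"
  shows "(\<exists>I. ((\<lambda>t. integral {0..t} (\<lambda>s. gradL x y (u s * v s))) \<longlongrightarrow> I) at_top)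
    \<and> ((\<lambda>t. integral {0..t} (\<lambda>s. exp (- (t - s) / lam) *\<^sub>R gradL x y (u s * v s))) \<longlongrightarrow> 0) at_top"
proof -
  interpret m: mgf x y lam u v u' v' u'' v'' Dinf
    by (rule mgf.intro[OF lam_pos du dv ddu ddv ode_u ode_v bdd_u bdd_v Delta_lim Dinf_nz])
  show ?thesis using m.final1 m.final2 by blast
qed

end
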